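(* Let $\mathcal C\subseteq2^{[n]}$ be a code such that its polar complex $\Gamma(\mathcal C)$ is shellable. Then: (1) $\mathcal C$ has no weak bitflip local obstructions, i.e. there is no pair $(g,\tau)$ with $g\in(\mathbb Z_2)^n$, $\tau\in\Delta(g\cdot\mathcal C)$, $\tau\notin g\cdot\mathcal C$, and $\operatorname{link}_\tau\Delta(g\cdot\mathcal C)$ not contractible; (2) $\mathcal C$ has no sphere link obstructions, i.e. there is no non-maximal face $F\in\Gamma(\mathcal C)$ with $\operatorname{link}_F\Gamma(\mathcal C)$ neither collapsible nor equal to $\Gamma(2^{[n]\setminus\underline F})$; (3) $\mathcal C$ has no chamber obstructions, i.e. there is no maximal face $\sigma$ of $\mathrm{cham}(\mathcal C)$ for which there exist distinct $T_1\ne T_2\in\Gamma(\mathcal C)$ with $\operatorname{link}_{T_1}\Gamma(\mathcal C)=\operatorname{link}_{T_2}\Gamma(\mathcal C)=\Gamma(2^\sigma)$.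
   Context: A code is a subset $\mathcal C\subseteq2^{[n]}$. $(\mathbb Z_2)^n$ acts on $2^{[n]}$ with generator $e_i$ toggling membership of $i$; $g\cdot\mathcal C=\{g\cdot\sigma:\sigma\in\mathcal C\}$. $\Delta(\mathcal C)$ is the set of all subsets of codewords. Polar complex: vertex set $[n]\sqcup\{\bar1,\dots,\bar n\}$, $\Sigma(\sigma)=\sigma\sqcup\{\bar i:i\notin\sigma\}$, $\Gamma(\mathcal C)$ the complex of all subsets of $\Sigma(\sigma)$, $\sigma\in\mathcal C$. The support $\underline F$ of a face $F$ is the set of $i\in[n]$ with $i\in F$ or $\bar i\in F$. For $S\subseteq[n]$, $\Gamma(2^S)$ is the complex on $S\sqcup\{\bar i:i\in S\}$ whose faces are the subsets containing no pair $\{i,\bar i\}$ ($\Gamma(2^\emptyset)=\{\emptyset\}$). $\operatorname{link}_F\Delta=\{\nu\in\Delta:\nu\cap F=\emptyset,\nu\cup F\in\Delta\}$. Contractible means the geometric realization is contractible (so $\{\}$ and $\{\emptyset\}$, having empty realization, are not contractible). A free pair in $\Delta$ is $(\sigma,\tau)$ with $\tau$ a facet, $\sigma\subsetneq\tau$, $\sigma$ in no other facet; collapsing along $\sigma$ gives $\{\nu\in\Delta:\nu\not\supseteq\sigma\}$; $\Delta$ is collapsible if finitely many collapses yield the void complex $\{\}$. $\mathrm{cham}(\mathcal C)$ is the set of $\sigma\subseteq[n]$ such that some $T\in\Gamma(\mathcal C)$ has $\underline T=[n]\setminus\sigma$ and $\operatorname{link}_T\Gamma(\mathcal C)=\Gamma(2^\sigma)$.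 A pure $k$-dimensional complex is shellable if its facets have an ordering $F_1,\dots,F_t$ such that for each $i>1$, the set of all subsets of $F_i$ intersected with the set of all subsets of $F_1,\dots,F_{i-1}$ is pure of dimension $k-1$. *)

theory Defs
  imports "HOL-Analysis.Analysis"
begin

definition ground :: "nat \<Rightarrow> nat set" where
  "ground n = {1..n}"

(* Geometric realization of a complex with vertex type 'a, as a subspace of
   'a \<Rightarrow> real with the product topology (for finite complexes this is the
   usual Euclidean topology on the finitely many relevant coordinates). *)
definition realization :: "'a set set \<Rightarrow> ('a \<Rightarrow> real) set" where
  "realization K = {f. \<exists>\<sigma>\<in>K. finite \<sigma> \<and> (\<forall>v. 0 \<le> f v) \<and> (\<forall>v. v \<notin> \<sigma> \<longrightarrow> f v = 0)
                        \<and> sum f \<sigma> = 1}"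

definition contractible_cx :: "'a set set \<Rightarrow> bool" where
  "contractible_cx K \<longleftrightarrow> realization K \<noteq> {} \<and> contractible (realization K)"

definition link :: "'a set \<Rightarrow> 'a set set \<Rightarrow> 'a set set" where
  "link F K = {\<nu>\<in>K. \<nu> \<inter> F = {} \<and> \<nu> \<union> F \<in> K}"

definition facet :: "'a set set \<Rightarrow> 'a set \<Rightarrow> bool" where
  "facet K \<tau> \<longleftrightarrow> \<tau> \<in> K \<and> (\<forall>\<rho>\<in>K. \<tau> \<subseteq> \<rho> \<longrightarrow> \<rho> = \<tau>)"

definition free_pair :: "'a set set \<Rightarrow> 'a set \<Rightarrow> 'a set \<Rightarrow> bool" where
  "free_pair K \<sigma> \<tau> \<longleftrightarrow> facet K \<tau> \<and> \<sigma> \<subset> \<tau> \<and>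
     (\<forall>\<rho>. facet K \<rho> \<and> \<sigma> \<subseteq> \<rho> \<longrightarrow> \<rho> = \<tau>)"

definition collapse :: "'a set set \<Rightarrow> 'a set \<Rightarrow> 'a set set" where
  "collapse K \<sigma> = {\<nu>\<in>K. \<not> \<sigma> \<subseteq> \<nu>}"

inductive collapsible :: "'a set set \<Rightarrow> bool" where
  void: "collapsible {}"
| step: "free_pair K \<sigma> \<tau> \<Longrightarrow> collapsible (collapse K \<sigma>) \<Longrightarrow> collapsible K"

definition pure_dim :: "'a set set \<Rightarrow> int \<Rightarrow> bool" where
  "pure_dim K d \<longleftrightarrow> (\<forall>F. facet K F \<longrightarrow> int (card F) = d + 1)"

definition shellable :: "'a set set \<Rightarrow> bool" where
  "shellable K \<longleftrightarrow> (\<exists>k. pure_dim K k \<and>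
     (\<exists>Fs. distinct Fs \<and> set Fs = {F. facet K F} \<and>
        (\<forall>i. 0 < i \<and> i < length Fs \<longrightarrow>
           pure_dim (Pow (Fs ! i) \<inter> (\<Union>j<i. Pow (Fs ! j))) (k - 1))))"

(* codes: sets of subsets of [n]; Z_2^n acts by symmetric difference with g \<subseteq> [n] *)
definition is_code :: "nat \<Rightarrow> nat set set \<Rightarrow> bool" where
  "is_code n C \<longleftrightarrow> C \<subseteq> Pow (ground n)"

definition flip :: "nat set \<Rightarrow> nat set \<Rightarrow> nat set" where
  "flip g \<sigma> = (\<sigma> - g) \<union> (g - \<sigma>)"

definition act :: "nat set \<Rightarrow> nat set set \<Rightarrow> nat set set" where
  "act g C = flip g ` C"

definition Delta :: "nat set set \<Rightarrow> nat set set" where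
  "Delta C = {\<tau>. \<exists>\<sigma>\<in>C. \<tau> \<subseteq> \<sigma>}"

(* polar complex: vertex (i,True) is i, vertex (i,False) is \<bar>i *)
definition Sig :: "nat \<Rightarrow> nat set \<Rightarrow> (nat \<times> bool) set" where
  "Sig n \<sigma> = {(i, True) | i. i \<in> \<sigma>} \<union> {(i, False) | i. i \<in> ground n \<and> i \<notin> \<sigma>}"

definition polar :: "nat \<Rightarrow> nat set set \<Rightarrow> (nat \<times> bool) set set" where
  "polar n C = {F. \<exists>\<sigma>\<in>C. F \<subseteq> Sig n \<sigma>}"

definition supp :: "(nat \<times> bool) set \<Rightarrow> nat set" where
  "supp F = fst ` F"

definition polar_full :: "nat set \<Rightarrow> (nat \<times> bool) set set" where
  "polar_full S = {F. F \<subseteq> S \<times> UNIV \<and> (\<forall>i. \<not> ((i, True) \<in> F \<and> (i, False) \<in> F))}"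

definition cham :: "nat \<Rightarrow> nat set set \<Rightarrow> nat set set" where
  "cham n C = {\<sigma>. \<sigma> \<subseteq> ground n \<and> (\<exists>T\<in>polar n C. supp T = ground n - \<sigma> \<and>
                   link T (polar n C) = polar_full \<sigma>)}"

definition weak_bitflip_obstruction :: "nat \<Rightarrow> nat set set \<Rightarrow> nat set \<Rightarrow> nat set \<Rightarrow> bool" where
  "weak_bitflip_obstruction n C g \<tau> \<longleftrightarrow> g \<subseteq> ground n \<and> \<tau> \<in> Delta (act g C) \<and>
     \<tau> \<notin> act g C \<and> \<not> contractible_cx (link \<tau> (Delta (act g C)))"

definition sphere_link_obstruction :: "nat \<Rightarrow> nat set set \<Rightarrow> (nat \<times> bool) set \<Rightarrow> bool" where
  "sphere_link_obstruction n C F \<longleftrightarrow> F \<in> polar n C \<and> \<not> facet (polar n C) F \<and>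
     \<not> collapsible (link F (polar n C)) \<and> link F (polar n C) \<noteq> polar_full (ground n - supp F)"

definition chamber_obstruction :: "nat \<Rightarrow> nat set set \<Rightarrow> nat set \<Rightarrow> bool" where
  "chamber_obstruction n C \<sigma> \<longleftrightarrow> facet (cham n C) \<sigma> \<and>
     (\<exists>T1\<in>polar n C. \<exists>T2\<in>polar n C. T1 \<noteq> T2 \<and>
        link T1 (polar n C) = polar_full \<sigma> \<and> link T2 (polar n C) = polar_full \<sigma>)"

end

theory Submission
  imports Defs
begin

definition SH :: "nat set set \<Rightarrow> (nat set \<Rightarrow> nat) \<Rightarrow> bool" where
  "SH S pos \<longleftrightarrow> inj_on pos S \<and> (\<forall>X\<in>S. \<forall>Y\<in>S. pos Y < pos X \<longrightarrow>
      (\<exists>k. k \<in> flip Y X \<and> flip {k} X \<in> S \<and> pos (flip {k} X) < pos X))"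

lemma flip_flip[simp]: "flip g (flip g X) = X"
  unfolding flip_def by auto

lemma flip_comm: "flip X Y = flip Y X"
  unfolding flip_def by auto

lemma SH_restrict:
  assumes "SH S pos"
    and "\<And>X Y k. X \<in> S \<inter> Q \<Longrightarrow> Y \<in> S \<inter> Q \<Longrightarrow> k \<in> flip Y X \<Longrightarrow> flip {k} X \<in> Q"
  shows "SH (S \<inter> Q) pos"
  unfolding SH_def
proof (intro conjI ballI impI)
  show "inj_on pos (S \<inter> Q)" using assms(1) unfolding SH_def by (meson inj_on_Int)
next
  fix X Y assume X: "X \<in> S \<inter> Q" and Y: "Y \<in> S \<inter> Q" and lt: "pos Y < pos X"
  then obtain k where k: "k \<in> flip Y X" "flip {k} X \<in> S" "pos (flip {k} X) < pos X"
    using assms(1) unfolding SH_def by blast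
  have "flip {k} X \<in> Q" using assms(2)[OF X Y k(1)] .
  then show "\<exists>k. k \<in> flip Y X \<and> flip {k} X \<in> S \<inter> Q \<and> pos (flip {k} X) < pos X"
    using k by blast
qed

definition Rset :: "nat set \<Rightarrow> nat set set \<Rightarrow> (nat set \<Rightarrow> nat) \<Rightarrow> nat set \<Rightarrow> nat set" where
  "Rset V S pos X = {k\<in>V. flip {k} X \<in> S \<and> pos (flip {k} X) < pos X}"

definition Fc :: "nat set \<Rightarrow> nat set set \<Rightarrow> (nat set \<times> nat set) set" where
  "Fc V S = {(A, X \<inter> A) | A X. A \<subseteq> V \<and> X \<in> S}"

definition chi :: "nat set \<Rightarrow> nat set set \<Rightarrow> int" where
  "chi V S = (\<Sum>p\<in>Fc V S. (-1) ^ card (fst p))"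

lemma alt_sum:
  assumes "finite V" "R \<subseteq> V"
  shows "(\<Sum>A\<in>{A. R \<subseteq> A \<and> A \<subseteq> V}. (-1::int) ^ card A) = (if R = V then (-1) ^ card V else 0)"
proof (cases "R = V")
  case True
  then have "{A. R \<subseteq> A \<and> A \<subseteq> V} = {V}" by auto
  then show ?thesis using True by simp
next
  case False
  then have "R \<subset> V" using assms by auto
  have fin: "finite {A. R \<subseteq> A \<and> A \<subseteq> V}" using assms(1) by (simp add: finite_Collect_subsets)
  have "card {A. A \<in> {A. R \<subseteq> A \<and> A \<subseteq> V} \<and> even (card A)} = card {A. A \<in> {A. R \<subseteq> A \<and> A \<subseteq> V} \<and> odd (card A)}"
    using card_subsupersets_even_odd[OF assms(1) \<open>R \<subset> V\<close>] by (simp add: conj_commute conj_left_commute)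
  from sum_alternating_cancels[OF fin this] False show ?thesis by simp
qed

lemma owner_iff:
  assumes SH: "SH S pos" and D: "\<forall>X\<in>S. \<forall>Y\<in>S. flip X Y \<subseteq> V"
    and X: "X \<in> S" and A: "A \<subseteq> V"
  shows "(\<forall>Y\<in>S. Y \<inter> A = X \<inter> A \<longrightarrow> pos X \<le> pos Y) \<longleftrightarrow> Rset V S pos X \<subseteq> A"
proof
  assume H: "\<forall>Y\<in>S. Y \<inter> A = X \<inter> A \<longrightarrow> pos X \<le> pos Y"
  show "Rset V S pos X \<subseteq> A"
  proof
    fix k assume k: "k \<in> Rset V S pos X"
    show "k \<in> A"
    proof (rule ccontr)
      assume "k \<notin> A"
      then have "flip {k} X \<inter> A = X \<inter> A" unfolding flip_def by auto
      with H k show False unfolding Rset_def by force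
    qed
  qed
next
  assume R: "Rset V S pos X \<subseteq> A"
  show "\<forall>Y\<in>S. Y \<inter> A = X \<inter> A \<longrightarrow> pos X \<le> pos Y"
  proof (intro ballI impI)
    fix Y assume Y: "Y \<in> S" and eq: "Y \<inter> A = X \<inter> A"
    show "pos X \<le> pos Y"
    proof (rule ccontr)
      assume "\<not> pos X \<le> pos Y"
      then have "pos Y < pos X" by simp
      then obtain k where k: "k \<in> flip Y X" "flip {k} X \<in> S" "pos (flip {k} X) < pos X"
        using SH X Y unfolding SH_def by blast
      have "k \<in> V" using D X Y k(1) by blast
      then have "k \<in> Rset V S pos X" using k unfolding Rset_def by blast
      then have "k \<in> A" using R by blast
      moreover have "k \<notin> A" using k(1) eq unfolding flip_def by blast
      ultimately show False by blast
    qed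
  qed
qed

lemma chi_shell:
  assumes SH: "SH S pos" and D: "\<forall>X\<in>S. \<forall>Y\<in>S. flip X Y \<subseteq> V"
    and fV: "finite V" and fS: "finite S"
  shows "chi V S = (\<Sum>X\<in>S. if Rset V S pos X = V then (-1) ^ card V else 0)"
proof -
  define G where "G = Sigma S (\<lambda>X. {A. Rset V S pos X \<subseteq> A \<and> A \<subseteq> V})"
  define h where "h = (\<lambda>(X::nat set, A::nat set). (A, X \<inter> A))"
  have inj: "pos X = pos Y \<Longrightarrow> X \<in> S \<Longrightarrow> Y \<in> S \<Longrightarrow> X = Y" for X Y
    using SH unfolding SH_def inj_on_def by blast
  have bij: "bij_betw h G (Fc V S)"
  proof (rule bij_betwI')
    fix p q assume p: "p \<in> G" and q: "q \<in> G"
    obtain X A where pXA: "p = (X, A)" by (cases p)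
    obtain Y B where qYB: "q = (Y, B)" by (cases q)
    have X: "X \<in> S" "Rset V S pos X \<subseteq> A" "A \<subseteq> V" using p pXA G_def by auto
    have Y: "Y \<in> S" "Rset V S pos Y \<subseteq> B" "B \<subseteq> V" using q qYB G_def by auto
    show "(h p = h q) = (p = q)"
    proof
      assume "h p = h q"
      then have AB: "A = B" and eq: "X \<inter> A = Y \<inter> A" using pXA qYB h_def by auto
      have "pos X \<le> pos Y" using owner_iff[OF SH D X(1) X(3)] X(2) Y(1) eq by auto
      moreover have "pos Y \<le> pos X" using owner_iff[OF SH D Y(1) Y(3)] Y(2) X(1) eq AB by auto
      ultimately have "X = Y" using inj X(1) Y(1) by simp
      then show "p = q" using pXA qYB AB by simp
    qed simp
  next
    fix p assume "p \<in> G"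
    then show "h p \<in> Fc V S" unfolding G_def h_def Fc_def by auto
  next
    fix q assume "q \<in> Fc V S"
    then obtain A X where q: "q = (A, X \<inter> A)" and A: "A \<subseteq> V" and X: "X \<in> S"
      unfolding Fc_def by blast
    obtain Y where Y: "Y \<in> S \<and> Y \<inter> A = X \<inter> A"
      and min: "\<forall>Z. Z \<in> S \<and> Z \<inter> A = X \<inter> A \<longrightarrow> pos Y \<le> pos Z"
      using ex_has_least_nat[of "\<lambda>Z. Z \<in> S \<and> Z \<inter> A = X \<inter> A" X pos] X by blast
    have "\<forall>Z\<in>S. Z \<inter> A = Y \<inter> A \<longrightarrow> pos Y \<le> pos Z" using min Y by auto
    then have "Rset V S pos Y \<subseteq> A" using owner_iff[OF SH D _ A] Y by blast
    then have "(Y, A) \<in> G" using Y A G_def by auto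
    moreover have "q = h (Y, A)" using q Y h_def by auto
    ultimately show "\<exists>p\<in>G. q = h p" by blast
  qed
  have "chi V S = (\<Sum>p\<in>G. (\<lambda>p. (-1::int) ^ card (fst p)) (h p))"
    unfolding chi_def using sum.reindex_bij_betw[OF bij, of "\<lambda>p. (-1::int) ^ card (fst p)"] by simp
  also have "\<dots> = (\<Sum>X\<in>S. \<Sum>A\<in>{A. Rset V S pos X \<subseteq> A \<and> A \<subseteq> V}. (-1::int) ^ card A)"
  proof -
    have "(\<Sum>p\<in>G. (\<lambda>p. (-1::int) ^ card (fst p)) (h p)) = (\<Sum>(X,A)\<in>G. (-1::int) ^ card A)"
      unfolding h_def by (simp add: split_def)
    also have "\<dots> = (\<Sum>X\<in>S. \<Sum>A\<in>{A. Rset V S pos X \<subseteq> A \<and> A \<subseteq> V}. (-1::int) ^ card A)"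
      unfolding G_def
      by (rule sum.Sigma[symmetric]) (auto simp: fS intro: finite_subset[of _ "Pow V"] fV)
    finally show ?thesis .
  qed
  also have "\<dots> = (\<Sum>X\<in>S. if Rset V S pos X = V then (-1) ^ card V else 0)"
    by (rule sum.cong[OF refl], rule alt_sum[OF fV]) (auto simp: Rset_def)
  finally show ?thesis .
qed

lemma chi_full:
  fixes V :: "nat set"
  assumes fV: "finite V"
  shows "(\<Sum>p\<in>{(A,P). P \<subseteq> A \<and> A \<subseteq> V}. (-1::int) ^ card (fst p)) = (-1) ^ card V"
proof -
  have eq: "{(A,P). P \<subseteq> A \<and> A \<subseteq> V} = (\<lambda>(P,A). (A,P)) ` (Sigma (Pow V) (\<lambda>P. {A. P \<subseteq> A \<and> A \<subseteq> V}))"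
    by (auto simp: image_iff)
  have inj: "inj_on (\<lambda>(P::nat set,A::nat set). (A,P)) (Sigma (Pow V) (\<lambda>P. {A. P \<subseteq> A \<and> A \<subseteq> V}))" by (auto simp: inj_on_def)
  have "(\<Sum>p\<in>{(A,P). P \<subseteq> A \<and> A \<subseteq> V}. (-1::int) ^ card (fst p))
      = (\<Sum>(P,A)\<in>Sigma (Pow V) (\<lambda>P. {A. P \<subseteq> A \<and> A \<subseteq> V}). (-1::int) ^ card A)"
    unfolding eq by (subst sum.reindex[OF inj]) (simp add: split_def comp_def)
  also have "\<dots> = (\<Sum>P\<in>Pow V. \<Sum>A\<in>{A. P \<subseteq> A \<and> A \<subseteq> V}. (-1::int) ^ card A)"
    by (rule sum.Sigma[symmetric]) (auto simp: fV intro: finite_subset[of _ "Pow V"])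
  also have "\<dots> = (\<Sum>P\<in>Pow V. if P = V then (-1) ^ card V else 0)"
    by (rule sum.cong[OF refl], rule alt_sum[OF fV]) auto
  also have "\<dots> = (-1) ^ card V"
    by (simp add: fV)
  finally show ?thesis .
qed

lemma flip_eq_on:
  assumes "W \<subseteq> V" "flip W X0 \<inter> V = flip V X0 \<inter> V"
  shows "W = V"
proof
  show "V \<subseteq> W"
  proof
    fix v assume v: "v \<in> V"
    have "(v \<in> flip W X0) = (v \<in> flip V X0)" using assms(2) v by blast
    then show "v \<in> W" using v unfolding flip_def by auto
  qed
qed (use assms in auto)

lemma chi_cube_minus:
  assumes fV: "finite V" and S: "S = {flip W X0 | W. W \<subseteq> V \<and> W \<noteq> V}"
  shows "chi V S = 0"
proof -
  have Fc: "Fc V S = {(A,P). P \<subseteq> A \<and> A \<subseteq> V} - {(V, flip V X0 \<inter> V)}"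
  proof
    show "Fc V S \<subseteq> {(A,P). P \<subseteq> A \<and> A \<subseteq> V} - {(V, flip V X0 \<inter> V)}"
    proof
      fix p assume "p \<in> Fc V S"
      then obtain A W where p: "p = (A, flip W X0 \<inter> A)" and A: "A \<subseteq> V" and W: "W \<subseteq> V" "W \<noteq> V"
        unfolding Fc_def S by blast
      have "p \<noteq> (V, flip V X0 \<inter> V)"
      proof
        assume "p = (V, flip V X0 \<inter> V)"
        then have "A = V" "flip W X0 \<inter> V = flip V X0 \<inter> V" using p by auto
        then show False using flip_eq_on[OF W(1)] W(2) by blast
      qed
      then show "p \<in> {(A,P). P \<subseteq> A \<and> A \<subseteq> V} - {(V, flip V X0 \<inter> V)}" using p A by auto
    qed
  next
    show "{(A,P). P \<subseteq> A \<and> A \<subseteq> V} - {(V, flip V X0 \<inter> V)} \<subseteq> Fc V S"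
    proof
      fix p assume p: "p \<in> {(A,P). P \<subseteq> A \<and> A \<subseteq> V} - {(V, flip V X0 \<inter> V)}"
      then obtain A P where pAP: "p = (A, P)" "P \<subseteq> A" "A \<subseteq> V" by blast
      define W where "W = flip P (X0 \<inter> A)"
      have WA: "W \<subseteq> A" using pAP(2) unfolding W_def flip_def by auto
      have eq: "flip W X0 \<inter> A = P" using pAP(2) unfolding W_def flip_def by auto
      have "W \<noteq> V"
      proof
        assume "W = V"
        then have "A = V" using WA pAP(3) by blast
        then have "P = flip V X0 \<inter> V" using eq \<open>W = V\<close> by simp
        then show False using p pAP \<open>A = V\<close> by auto
      qed
      then have "flip W X0 \<in> S" unfolding S using WA pAP(3) by blast
      then show "p \<in> Fc V S" unfolding Fc_def using pAP eq by blast
    qed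
  qed
  have fin: "finite {(A,P). P \<subseteq> A \<and> A \<subseteq> V}"
  proof (rule finite_subset[of _ "Pow V \<times> Pow V"])
    show "{(A, P). P \<subseteq> A \<and> A \<subseteq> V} \<subseteq> Pow V \<times> Pow V" by auto
  qed (simp add: fV)
  have mem: "(V, flip V X0 \<inter> V) \<in> {(A,P). P \<subseteq> A \<and> A \<subseteq> V}" by auto
  have "chi V S = (\<Sum>p\<in>{(A,P). P \<subseteq> A \<and> A \<subseteq> V}. (-1::int) ^ card (fst p)) - (-1) ^ card V"
    unfolding chi_def Fc by (subst sum_diff1[OF fin]) (use mem in simp)
  then show ?thesis using chi_full[OF fV] by simp
qed

lemma flip_self_image:
  assumes "flip X Y \<subseteq> V"
  shows "X = flip (flip X Y) Y"
  unfolding flip_def by auto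

lemma L_main:
  assumes "finite V" "SH S pos" "\<forall>X\<in>S. \<forall>Y\<in>S. flip X Y \<subseteq> V" "X0 \<in> S"
    "\<forall>k\<in>V. flip {k} X0 \<in> S \<and> pos (flip {k} X0) < pos X0" "W \<subseteq> V"
  shows "flip W X0 \<in> S"
  using assms
proof (induction "card V" arbitrary: V S X0 W rule: less_induct)
  case (less V S X0 W)
  note fV = less.prems(1) and SH = less.prems(2) and D = less.prems(3) and X0 = less.prems(4)
    and nb = less.prems(5)
  have claim1: "flip W' X0 \<in> S" if W': "W' \<subseteq> V" "W' \<noteq> V" for W'
  proof -
    obtain a where a: "a \<in> V" "a \<notin> W'" using W' by blast
    let ?S = "S \<inter> {Y. a \<in> Y \<longleftrightarrow> a \<in> X0}"
    have SH': "SH ?S pos"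
    proof (rule SH_restrict[OF SH])
      fix X Y k assume "X \<in> S \<inter> {Y. a \<in> Y \<longleftrightarrow> a \<in> X0}" "Y \<in> S \<inter> {Y. a \<in> Y \<longleftrightarrow> a \<in> X0}" "k \<in> flip Y X"
      then show "flip {k} X \<in> {Y. a \<in> Y \<longleftrightarrow> a \<in> X0}" unfolding flip_def by auto
    qed
    have D': "\<forall>X\<in>?S. \<forall>Y\<in>?S. flip X Y \<subseteq> V - {a}" using D unfolding flip_def by blast
    have X0': "X0 \<in> ?S" using X0 by simp
    have nb': "\<forall>k\<in>V - {a}. flip {k} X0 \<in> ?S \<and> pos (flip {k} X0) < pos X0"
      using nb unfolding flip_def by auto
    have "card (V - {a}) < card V" using card_Diff1_less[OF fV a(1)] .
    from less.hyps[OF this _ SH' D' X0' nb'] fV a W'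
    show ?thesis by auto
  qed
  show ?case
  proof (cases "W = V")
    case False
    then show ?thesis using claim1 less.prems(6) by blast
  next
    case True
    show ?thesis
    proof (rule ccontr)
      assume notin: "flip W X0 \<notin> S"
      have Seq: "S = {flip W' X0 | W'. W' \<subseteq> V \<and> W' \<noteq> V}"
      proof
        show "S \<subseteq> {flip W' X0 | W'. W' \<subseteq> V \<and> W' \<noteq> V}"
        proof
          fix Y assume Y: "Y \<in> S"
          have sub: "flip Y X0 \<subseteq> V" using D Y X0 by blast
          have "Y = flip (flip Y X0) X0" using flip_self_image[OF sub] .
          moreover have "flip Y X0 \<noteq> V" using notin True Y \<open>Y = flip (flip Y X0) X0\<close> by metis
          ultimately show "Y \<in> {flip W' X0 | W'. W' \<subseteq> V \<and> W' \<noteq> V}" using sub by blast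
        qed
      next
        show "{flip W' X0 | W'. W' \<subseteq> V \<and> W' \<noteq> V} \<subseteq> S" using claim1 by blast
      qed
      have fS: "finite S" unfolding Seq using fV by (simp add: finite_image_set)
      have "chi V S = 0" using chi_cube_minus[OF fV Seq] .
      moreover have "chi V S = (\<Sum>X\<in>S. if Rset V S pos X = V then (-1) ^ card V else 0)"
        using chi_shell[OF SH D fV fS] .
      moreover have "(\<Sum>X\<in>S. if Rset V S pos X = V then (-1::int) ^ card V else 0)
          = of_nat (card {X\<in>S. Rset V S pos X = V}) * (-1) ^ card V"
        by (simp add: sum.inter_filter[OF fS, symmetric])
      moreover have "card {X\<in>S. Rset V S pos X = V} > 0"
      proof -
        have "Rset V S pos X0 = V" using nb unfolding Rset_def by auto
        then have "X0 \<in> {X\<in>S. Rset V S pos X = V}" using X0 by simp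
        then show ?thesis using fS by (auto simp: card_gt_0_iff)
      qed
      ultimately show False by simp
    qed
  qed
qed

definition sv :: "nat set \<Rightarrow> nat set \<Rightarrow> (nat \<times> bool) set" where
  "sv V X = (\<lambda>i. (i, i \<in> X)) ` V"

definition LK :: "nat set \<Rightarrow> nat set set \<Rightarrow> (nat \<times> bool) set set" where
  "LK V S = {G. \<exists>X\<in>S. G \<subseteq> sv V X}"

lemma finite_ground[simp]: "finite (ground n)" by (simp add: ground_def)
lemma card_ground[simp]: "card (ground n) = n" by (simp add: ground_def)

lemma Sig_sv: "X \<subseteq> ground n \<Longrightarrow> Sig n X = sv (ground n) X"
  unfolding Sig_def sv_def by auto

lemma sv_subset_iff: "sv V X \<subseteq> sv V Y \<longleftrightarrow> X \<inter> V = Y \<inter> V"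
  unfolding sv_def by auto

lemma sv_inter: "sv V X \<inter> sv V Z = sv (V - flip X Z) X"
  unfolding sv_def flip_def by auto

lemma card_sv: "card (sv V X) = card V"
  unfolding sv_def by (rule card_image) (auto simp: inj_on_def)

lemma finite_sv[simp]: "finite V \<Longrightarrow> finite (sv V X)"
  unfolding sv_def by simp

lemma polar_LK: "is_code n C \<Longrightarrow> polar n C = LK (ground n) C"
  unfolding polar_def LK_def is_code_def using Sig_sv by blast

lemma facet_polar:
  assumes "is_code n C"
  shows "facet (polar n C) F \<longleftrightarrow> (\<exists>X\<in>C. F = Sig n X)"
proof
  assume F: "facet (polar n C) F"
  then obtain X where X: "X \<in> C" "F \<subseteq> Sig n X" unfolding facet_def polar_def by blast
  have "Sig n X \<in> polar n C" using X unfolding polar_def by blast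
  then show "\<exists>X\<in>C. F = Sig n X" using F X unfolding facet_def by blast
next
  assume "\<exists>X\<in>C. F = Sig n X"
  then obtain X where X: "X \<in> C" "F = Sig n X" by blast
  have Xg: "X \<subseteq> ground n" using X assms unfolding is_code_def by blast
  show "facet (polar n C) F" unfolding facet_def
  proof (intro conjI ballI impI)
    show "F \<in> polar n C" using X unfolding polar_def by blast
  next
    fix G assume G: "G \<in> polar n C" "F \<subseteq> G"
    then obtain Y where Y: "Y \<in> C" "G \<subseteq> Sig n Y" unfolding polar_def by blast
    have Yg: "Y \<subseteq> ground n" using Y assms unfolding is_code_def by blast
    have "Sig n X \<subseteq> Sig n Y" using G X Y by blast
    then have "X \<inter> ground n = Y \<inter> ground n" using Sig_sv[OF Xg] Sig_sv[OF Yg] sv_subset_iff by metis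
    then have "X = Y" using Xg Yg by blast
    then show "G = F" using G X Y by blast
  qed
qed

lemma card_Sig: "X \<subseteq> ground n \<Longrightarrow> card (Sig n X) = n"
  using Sig_sv card_sv by simp

lemma shellable_SH:
  assumes code: "is_code n C" and sh: "shellable (polar n C)"
  shows "\<exists>pos. SH C pos"
proof (cases "C = {}")
  case True
  then show ?thesis unfolding SH_def by auto
next
  case False
  have Cg: "\<And>X. X \<in> C \<Longrightarrow> X \<subseteq> ground n" using code unfolding is_code_def by blast
  obtain k Fs where pk: "pure_dim (polar n C) k" and dist: "distinct Fs"
    and setFs: "set Fs = {F. facet (polar n C) F}"
    and shell: "\<And>i. 0 < i \<Longrightarrow> i < length Fs \<Longrightarrow>
           pure_dim (Pow (Fs ! i) \<inter> (\<Union>j<i. Pow (Fs ! j))) (k - 1)"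
    using sh unfolding shellable_def by blast
  obtain X1 where X1: "X1 \<in> C" using False by blast
  have "facet (polar n C) (Sig n X1)" using facet_polar[OF code] X1 by blast
  then have "int (card (Sig n X1)) = k + 1" using pk unfolding pure_dim_def by blast
  then have kn: "k = int n - 1" using card_Sig[OF Cg[OF X1]] by simp
  have inF: "\<And>X. X \<in> C \<Longrightarrow> Sig n X \<in> set Fs" using setFs facet_polar[OF code] by blast
  define pos where "pos X = (SOME i. i < length Fs \<and> Fs ! i = Sig n X)" for X
  have pos: "pos X < length Fs \<and> Fs ! pos X = Sig n X" if "X \<in> C" for X
  proof -
    have "\<exists>i. i < length Fs \<and> Fs ! i = Sig n X" using inF[OF that] by (simp add: in_set_conv_nth)
    then show ?thesis unfolding pos_def by (rule someI_ex)
  qed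
  have Sig_inj: "X = Y" if "X \<in> C" "Y \<in> C" "Sig n X = Sig n Y" for X Y
  proof -
    have "X \<inter> ground n = Y \<inter> ground n" using that Sig_sv Cg sv_subset_iff by (metis order_refl)
    then show ?thesis using Cg that by blast
  qed
  have posI: "pos X = j" if "X \<in> C" "j < length Fs" "Fs ! j = Sig n X" for X j
    using pos[OF that(1)] that dist nth_eq_iff_index_eq by metis
  have inj: "inj_on pos C"
  proof (rule inj_onI)
    fix X Y assume "X \<in> C" "Y \<in> C" "pos X = pos Y"
    then show "X = Y" using pos Sig_inj by metis
  qed
  show ?thesis
  proof (rule exI[of _ pos], unfold SH_def, intro conjI inj ballI impI)
    fix X Y assume X: "X \<in> C" and Y: "Y \<in> C" and lt: "pos Y < pos X"
    define i where "i = pos X"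
    have i: "0 < i" "i < length Fs" using lt pos[OF X] i_def by auto
    define K where "K = Pow (Fs ! i) \<inter> (\<Union>j<i. Pow (Fs ! j))"
    have pK: "pure_dim K (k - 1)" using shell[OF i] K_def by simp
    have GK: "Sig n X \<inter> Sig n Y \<in> K" unfolding K_def i_def using pos[OF X] pos[OF Y] lt by auto
    have finK: "finite K"
    proof -
      have "Fs ! i \<in> set Fs" using i by simp
      then have "facet (polar n C) (Fs ! i)" using setFs by simp
      then obtain Z where "Z \<in> C" "Fs ! i = Sig n Z" using facet_polar[OF code] by blast
      then have "finite (Fs ! i)" using Sig_sv Cg by simp
      then show ?thesis unfolding K_def by simp
    qed
    obtain F where F: "F \<in> K" "Sig n X \<inter> Sig n Y \<subseteq> F" "\<forall>b\<in>K. F \<subseteq> b \<longrightarrow> F = b"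
      using finite_has_maximal2[OF finK GK] by blast
    have facF: "facet K F" unfolding facet_def using F by blast
    then have cardF: "int (card F) = k" using pK unfolding pure_dim_def by simp
    from F(1) obtain j where j: "j < i" "F \<subseteq> Fs ! j" "F \<subseteq> Fs ! i" unfolding K_def by blast
    have "Fs ! j \<in> set Fs" using j i by simp
    then obtain Z where Z: "Z \<in> C" "Fs ! j = Sig n Z" using setFs facet_polar[OF code] by auto
    have posZ: "pos Z = j" using posI[OF Z(1)] j i Z by simp
    have "F \<subseteq> Sig n X \<inter> Sig n Z" using j Z pos[OF X] i_def by auto
    then have FXZ: "F \<subseteq> sv (ground n - flip X Z) X"
      using Sig_sv[OF Cg[OF X]] Sig_sv[OF Cg[OF Z(1)]] sv_inter by metis
    have "X \<noteq> Z" using posZ j(1) i_def by auto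
    then have ne: "flip X Z \<noteq> {}" unfolding flip_def by auto
    have fsub: "flip X Z \<subseteq> ground n" using Cg[OF X] Cg[OF Z(1)] unfolding flip_def by auto
    have "card F \<le> card (ground n - flip X Z)"
      using card_mono[OF _ FXZ] card_sv by (simp)
    also have "\<dots> = n - card (flip X Z)" using fsub by (simp add: card_Diff_subset finite_subset)
    finally have c1: "card F \<le> n - card (flip X Z)" .
    have "card (flip X Z) \<ge> 1" using ne fsub by (metis One_nat_def Suc_leI card_gt_0_iff finite_ground finite_subset)
    moreover have "card (flip X Z) \<le> n" using card_mono[OF finite_ground fsub] by simp
    ultimately have c2: "card (flip X Z) = 1" using c1 cardF kn by linarith
    then obtain k0 where k0: "flip X Z = {k0}" using card_1_singletonE by blast
    have Zeq: "Z = flip {k0} X" using flip_self_image[of Z X] k0 flip_comm by (metis order_refl)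
    have "Sig n X \<inter> Sig n Y \<subseteq> sv (ground n - {k0}) X" using F(2) FXZ k0 by auto
    then have "sv (ground n - flip X Y) X \<subseteq> sv (ground n - {k0}) X"
      using Sig_sv[OF Cg[OF X]] Sig_sv[OF Cg[OF Y]] sv_inter by simp
    moreover have "k0 \<in> ground n" using fsub k0 by auto
    ultimately have "k0 \<in> flip X Y" unfolding sv_def by auto
    then show "\<exists>k. k \<in> flip Y X \<and> flip {k} X \<in> C \<and> pos (flip {k} X) < pos X"
      using Zeq Z(1) posZ j(1) i_def flip_comm by metis
  qed
qed

lemma flip_flip2: "flip a (flip b X) = flip (flip a b) X"
  unfolding flip_def by auto

lemma sv_eq_iff: "sv V X = sv V Y \<longleftrightarrow> X \<inter> V = Y \<inter> V"
  using sv_subset_iff by (metis subset_antisym order_refl)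

lemma fst_sv[simp]: "fst ` sv V X = V"
  unfolding sv_def by (auto simp: image_image)

lemma LK_subset_full: "LK V S \<subseteq> polar_full V"
  unfolding LK_def polar_full_def sv_def by auto

lemma LK_full:
  assumes "\<forall>W\<subseteq>V. flip W X0 \<in> S"
  shows "polar_full V \<subseteq> LK V S"
proof
  fix G assume G: "G \<in> polar_full V"
  define W where "W = {i\<in>V. (i, i \<notin> X0) \<in> G}"
  have "W \<subseteq> V" unfolding W_def by blast
  then have "flip W X0 \<in> S" using assms by blast
  moreover have "G \<subseteq> sv V (flip W X0)"
  proof
    fix p assume p: "p \<in> G"
    obtain i b where ib: "p = (i, b)" by (cases p)
    have iV: "i \<in> V" using G p ib unfolding polar_full_def by auto
    have cons: "\<not> ((i, True) \<in> G \<and> (i, False) \<in> G)" using G unfolding polar_full_def by auto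
    have "b = (i \<in> flip W X0)"
    proof (cases "b = (i \<in> X0)")
      case True
      have "(i, i \<notin> X0) \<notin> G" using cons p ib True by (cases b) auto
      then have "i \<notin> W" unfolding W_def by blast
      then show ?thesis using True unfolding flip_def by auto
    next
      case False
      then have "(i, i \<notin> X0) \<in> G" using p ib by (cases b) auto
      then have "i \<in> W" unfolding W_def using iV by blast
      then show ?thesis using False unfolding flip_def by auto
    qed
    then show "p \<in> sv V (flip W X0)" using ib iV unfolding sv_def by auto
  qed
  ultimately show "G \<in> LK V S" unfolding LK_def by blast
qed

lemma link_polar:
  assumes code: "is_code n C" and F: "F \<in> polar n C"
  shows "\<exists>X0\<in>C. F = sv (supp F) X0 \<and> supp F \<subseteq> ground n \<and>
     link F (polar n C) = LK (ground n - supp F) {X\<in>C. X \<inter> supp F = X0 \<inter> supp F}"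
proof -
  have Cg: "\<And>X. X \<in> C \<Longrightarrow> X \<subseteq> ground n" using code unfolding is_code_def by blast
  obtain X0 where X0: "X0 \<in> C" "F \<subseteq> Sig n X0" using F unfolding polar_def by blast
  have FX0: "F \<subseteq> sv (ground n) X0" using X0 Sig_sv Cg by simp
  define A where "A = supp F"
  have Fe: "F = sv A X0" using FX0 unfolding A_def supp_def sv_def by force
  have Ag: "A \<subseteq> ground n" using FX0 unfolding A_def supp_def sv_def by auto
  have "link F (polar n C) = LK (ground n - A) {X\<in>C. X \<inter> A = X0 \<inter> A}"
  proof
    show "link F (polar n C) \<subseteq> LK (ground n - A) {X\<in>C. X \<inter> A = X0 \<inter> A}"
    proof
      fix G assume G: "G \<in> link F (polar n C)"
      then have G1: "G \<inter> F = {}" "G \<union> F \<in> polar n C" unfolding link_def by auto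
      then obtain Y where Y: "Y \<in> C" "G \<union> F \<subseteq> Sig n Y" unfolding polar_def by blast
      have GF: "G \<union> F \<subseteq> sv (ground n) Y" using Y Sig_sv Cg by simp
      have "sv A X0 \<subseteq> sv (ground n) Y" using GF Fe by auto
      then have YA: "Y \<inter> A = X0 \<inter> A" unfolding sv_def using Ag by auto
      have "G \<subseteq> sv (ground n - A) Y"
      proof
        fix p assume p: "p \<in> G"
        then obtain i where i: "p = (i, i \<in> Y)" "i \<in> ground n" using GF unfolding sv_def by auto
        have "i \<notin> A"
        proof
          assume "i \<in> A"
          then have "(i, i \<in> Y) \<in> F" using Fe YA unfolding sv_def by auto
          then show False using G1(1) p i by auto
        qed
        then show "p \<in> sv (ground n - A) Y" using i unfolding sv_def by auto
      qed
      then show "G \<in> LK (ground n - A) {X\<in>C. X \<inter> A = X0 \<inter> A}" unfolding LK_def using Y YA by blast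
    qed
  next
    show "LK (ground n - A) {X\<in>C. X \<inter> A = X0 \<inter> A} \<subseteq> link F (polar n C)"
    proof
      fix G assume "G \<in> LK (ground n - A) {X\<in>C. X \<inter> A = X0 \<inter> A}"
      then obtain Y where Y: "Y \<in> C" "Y \<inter> A = X0 \<inter> A" "G \<subseteq> sv (ground n - A) Y"
        unfolding LK_def by blast
      have SY: "Sig n Y = sv (ground n) Y" using Cg Y Sig_sv by simp
      have "F = sv A Y" using Fe Y(2) sv_eq_iff by metis
      then have "G \<union> F \<subseteq> Sig n Y" using SY Y(3) Ag unfolding sv_def by auto
      moreover have "G \<inter> F = {}" using Y(3) \<open>F = sv A Y\<close> unfolding sv_def by auto
      ultimately show "G \<in> link F (polar n C)"
      proof -
        assume GF: "G \<union> F \<subseteq> Sig n Y" and GF0: "G \<inter> F = {}"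
        have "G \<union> F \<in> polar n C" unfolding polar_def using Y(1) GF by blast
        moreover have "G \<in> polar n C" unfolding polar_def using Y(1) GF by blast
        ultimately show ?thesis unfolding link_def using GF0 by simp
      qed
    qed
  qed
  then have L: "link F (polar n C) = LK (ground n - supp F) {X\<in>C. X \<inter> supp F = X0 \<inter> supp F}"
    unfolding A_def .
  have "F = sv (supp F) X0" "supp F \<subseteq> ground n" using Fe Ag unfolding A_def by auto
  then show ?thesis using X0(1) L by (intro bexI[of _ X0] conjI)
qed

lemma SH_remove_max:
  assumes "SH S pos" "\<forall>Y\<in>S. pos Y \<le> pos X"
  shows "SH (S - {X}) pos"
  unfolding SH_def
proof (intro conjI ballI impI)
  have "inj_on pos S" using assms(1) unfolding SH_def by simp
  then show "inj_on pos (S - {X})" by (rule inj_on_diff)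
next
  fix X' Y' assume X': "X' \<in> S - {X}" and Y': "Y' \<in> S - {X}" and lt: "pos Y' < pos X'"
  then obtain k where k: "k \<in> flip Y' X'" "flip {k} X' \<in> S" "pos (flip {k} X') < pos X'"
    using assms(1) unfolding SH_def by blast
  have "pos X' \<le> pos X" using assms(2) X' by auto
  then have "flip {k} X' \<noteq> X" using k(3) by auto
  then show "\<exists>k. k \<in> flip Y' X' \<and> flip {k} X' \<in> S - {X} \<and> pos (flip {k} X') < pos X'"
    using k by blast
qed

lemma LK_collapsible:
  assumes "finite V" "finite S" "SH S pos" "\<forall>X\<in>S. \<forall>Y\<in>S. flip X Y \<subseteq> V"
    "\<forall>X\<in>S. Rset V S pos X \<noteq> V"
  shows "collapsible (LK V S)"
  using assms
proof (induction "card S" arbitrary: S rule: less_induct)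
  case (less S)
  note fV = less.prems(1) and fS = less.prems(2) and SH = less.prems(3) and D = less.prems(4)
    and NR = less.prems(5)
  show ?case
  proof (cases "S = {}")
    case True
    then have "LK V S = {}" unfolding LK_def by auto
    then show ?thesis by (simp add: collapsible.void)
  next
    case False
    define X where "X = (SOME X. X \<in> S \<and> pos X = Max (pos ` S))"
    have "Max (pos ` S) \<in> pos ` S" using False fS by simp
    then have "\<exists>X. X \<in> S \<and> pos X = Max (pos ` S)" by auto
    then have "X \<in> S \<and> pos X = Max (pos ` S)" unfolding X_def by (rule someI_ex)
    then have X: "X \<in> S" "pos X = Max (pos ` S)" by auto
    have maxX: "\<forall>Y\<in>S. pos Y \<le> pos X" using X fS by simp
    have inj: "\<And>Y Z. Y \<in> S \<Longrightarrow> Z \<in> S \<Longrightarrow> pos Y = pos Z \<Longrightarrow> Y = Z"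
      using SH unfolding SH_def inj_on_def by blast
    define R where "R = Rset V S pos X"
    have RV: "R \<subseteq> V" "R \<noteq> V" using NR X(1) unfolding R_def Rset_def by auto
    have onlyX: "Y = X" if Y: "Y \<in> S" "sv R X \<subseteq> sv V Y" for Y
    proof -
      have "Y \<inter> R = X \<inter> R" using that RV unfolding sv_def by auto
      then have "pos X \<le> pos Y" using owner_iff[OF SH D X(1) RV(1)] R_def Y(1) by auto
      then show ?thesis using maxX Y(1) inj X(1) by (meson le_antisym)
    qed
    have facX: "facet (LK V S) (sv V X)" unfolding facet_def
    proof (intro conjI ballI impI)
      show "sv V X \<in> LK V S" unfolding LK_def using X by blast
    next
      fix G assume G: "G \<in> LK V S" "sv V X \<subseteq> G"
      then obtain Y where Y: "Y \<in> S" "G \<subseteq> sv V Y" unfolding LK_def by blast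
      then have "X \<inter> V = Y \<inter> V" using G sv_subset_iff by (metis subset_trans)
      then have "sv V Y = sv V X" using sv_eq_iff by metis
      then show "G = sv V X" using G Y by auto
    qed
    have fp: "free_pair (LK V S) (sv R X) (sv V X)" unfolding free_pair_def
    proof (intro conjI allI impI)
      show "facet (LK V S) (sv V X)" by (rule facX)
    next
      obtain v where v: "v \<in> V" "v \<notin> R" using RV by blast
      have "(v, v \<in> X) \<notin> sv R X" using v unfolding sv_def by auto
      moreover have "(v, v \<in> X) \<in> sv V X" using v unfolding sv_def by auto
      moreover have "sv R X \<subseteq> sv V X" using RV unfolding sv_def by auto
      ultimately show "sv R X \<subset> sv V X" by blast
    next
      fix \<rho> assume H: "facet (LK V S) \<rho> \<and> sv R X \<subseteq> \<rho>"
      then obtain Y where Y: "Y \<in> S" "\<rho> \<subseteq> sv V Y" unfolding facet_def LK_def by blast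
      then have "Y = X" using onlyX H by blast
      then show "\<rho> = sv V X" using H Y facX unfolding facet_def by blast
    qed
    have ceq: "collapse (LK V S) (sv R X) = LK V (S - {X})"
    proof
      show "collapse (LK V S) (sv R X) \<subseteq> LK V (S - {X})"
      proof
        fix G assume G: "G \<in> collapse (LK V S) (sv R X)"
        then obtain Y where Y: "Y \<in> S" "G \<subseteq> sv V Y" and nr: "\<not> sv R X \<subseteq> G"
          unfolding collapse_def LK_def by blast
        show "G \<in> LK V (S - {X})"
        proof (cases "Y = X")
          case False
          then show ?thesis using Y unfolding LK_def by blast
        next
          case True
          then obtain r where r: "r \<in> R" "(r, r \<in> X) \<notin> G" using nr unfolding sv_def by auto
          have Z: "flip {r} X \<in> S" using r(1) unfolding R_def Rset_def by auto
          have "flip {r} X \<noteq> X" unfolding flip_def by auto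
          moreover have "G \<subseteq> sv V (flip {r} X)"
          proof
            fix p assume p: "p \<in> G"
            then obtain i where i: "p = (i, i \<in> X)" "i \<in> V" using Y True unfolding sv_def by auto
            have "i \<noteq> r" using p i r by auto
            then show "p \<in> sv V (flip {r} X)" using i unfolding sv_def flip_def by auto
          qed
          ultimately show ?thesis using Z unfolding LK_def by blast
        qed
      qed
    next
      show "LK V (S - {X}) \<subseteq> collapse (LK V S) (sv R X)"
      proof
        fix G assume "G \<in> LK V (S - {X})"
        then obtain Y where Y: "Y \<in> S" "Y \<noteq> X" "G \<subseteq> sv V Y" unfolding LK_def by blast
        have "\<not> sv R X \<subseteq> G" using onlyX Y by blast
        then show "G \<in> collapse (LK V S) (sv R X)" unfolding collapse_def LK_def using Y by blast
      qed
    qed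
    have "collapsible (LK V (S - {X}))"
    proof (rule less.hyps)
      show "card (S - {X}) < card S" using card_Diff1_less[OF fS X(1)] .
      show "finite V" by (rule fV)
      show "finite (S - {X})" using fS by simp
      show "SH (S - {X}) pos" using SH_remove_max[OF SH maxX] .
      show "\<forall>X'\<in>S - {X}. \<forall>Y\<in>S - {X}. flip X' Y \<subseteq> V" using D by blast
      show "\<forall>Y\<in>S - {X}. Rset V (S - {X}) pos Y \<noteq> V"
      proof
        fix Y assume Y: "Y \<in> S - {X}"
        have "Rset V (S - {X}) pos Y \<subseteq> Rset V S pos Y" unfolding Rset_def by auto
        moreover have "Rset V S pos Y \<subseteq> V" unfolding Rset_def by auto
        ultimately show "Rset V (S - {X}) pos Y \<noteq> V" using NR Y by blast
      qed
    qed
    then have "collapsible (collapse (LK V S) (sv R X))" unfolding ceq .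
    from collapsible.step[OF fp this] show ?thesis .
  qed
qed

lemma code_sub: "is_code n C \<Longrightarrow> X \<in> C \<Longrightarrow> X \<subseteq> ground n"
  unfolding is_code_def by blast

lemma finite_code: "is_code n C \<Longrightarrow> finite C"
proof -
  assume "is_code n C"
  then have "C \<subseteq> Pow (ground n)" unfolding is_code_def .
  then show "finite C" by (rule finite_subset) simp
qed

lemma no_sphere:
  assumes code: "is_code n C" and SH: "SH C pos"
  shows "\<not> sphere_link_obstruction n C F"
proof
  assume ob: "sphere_link_obstruction n C F"
  then have F: "F \<in> polar n C" and nc: "\<not> collapsible (link F (polar n C))"
    and ne: "link F (polar n C) \<noteq> polar_full (ground n - supp F)"
    unfolding sphere_link_obstruction_def by auto
  obtain X0 where X0: "X0 \<in> C" "F = sv (supp F) X0" "supp F \<subseteq> ground n"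
    and L: "link F (polar n C) = LK (ground n - supp F) {X\<in>C. X \<inter> supp F = X0 \<inter> supp F}"
    using link_polar[OF code F] by blast
  define A where "A = supp F"
  define V where "V = ground n - A"
  define S where "S = {X\<in>C. X \<inter> A = X0 \<inter> A}"
  have SQ: "S = C \<inter> {X. X \<inter> A = X0 \<inter> A}" unfolding S_def by auto
  have SH': "SH S pos" unfolding SQ
  proof (rule SH_restrict[OF SH])
    fix X Y k assume "X \<in> C \<inter> {X. X \<inter> A = X0 \<inter> A}" "Y \<in> C \<inter> {X. X \<inter> A = X0 \<inter> A}" "k \<in> flip Y X"
    then show "flip {k} X \<in> {X. X \<inter> A = X0 \<inter> A}" unfolding flip_def by auto
  qed
  have D: "\<forall>X\<in>S. \<forall>Y\<in>S. flip X Y \<subseteq> V"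
    using code_sub[OF code] unfolding S_def V_def flip_def by blast
  have fV: "finite V" unfolding V_def by simp
  have fS: "finite S" unfolding S_def using finite_code[OF code] by simp
  have LL: "link F (polar n C) = LK V S" using L unfolding V_def S_def A_def .
  show False
  proof (cases "\<exists>X\<in>S. Rset V S pos X = V")
    case True
    then obtain X where X: "X \<in> S" "Rset V S pos X = V" by blast
    have nb: "\<forall>k\<in>V. flip {k} X \<in> S \<and> pos (flip {k} X) < pos X"
      using X(2) unfolding Rset_def by blast
    have "\<forall>W\<subseteq>V. flip W X \<in> S" using L_main[OF fV SH' D X(1) nb] by blast
    then have "polar_full V \<subseteq> LK V S" by (rule LK_full)
    then have "LK V S = polar_full V" using LK_subset_full by blast
    then show False using ne LL unfolding V_def A_def by simp
  next
    case False
    then have "collapsible (LK V S)" using LK_collapsible[OF fV fS SH' D] by blast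
    then show False using nc LL by simp
  qed
qed

lemma sv_in_full: "sv V X \<in> polar_full V"
  unfolding sv_def polar_full_def by auto

lemma cham_of_block:
  assumes code: "is_code n C" and X: "X \<in> C" and V': "V' \<subseteq> ground n"
    and blk: "\<forall>W\<subseteq>V'. flip W X \<in> C"
  shows "V' \<in> cham n C"
proof -
  define T where "T = sv (ground n - V') X"
  have Xg: "X \<subseteq> ground n" using code_sub[OF code X] .
  have "T \<subseteq> sv (ground n) X" unfolding T_def sv_def by auto
  then have "T \<subseteq> Sig n X" using Sig_sv[OF Xg] by simp
  then have TP: "T \<in> polar n C" unfolding polar_def using X by blast
  have sT: "supp T = ground n - V'" unfolding T_def supp_def by simp
  obtain X0 where X0: "X0 \<in> C" "T = sv (supp T) X0"
    and L: "link T (polar n C) = LK (ground n - supp T) {Y\<in>C. Y \<inter> supp T = X0 \<inter> supp T}"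
    using link_polar[OF code TP] by blast
  have gg: "ground n - supp T = V'" using sT V' by auto
  have "sv (supp T) X = sv (supp T) X0" using X0(2) sT unfolding T_def by simp
  then have XX0: "X \<inter> supp T = X0 \<inter> supp T" by (simp add: sv_eq_iff)
  have "\<forall>W\<subseteq>V'. flip W X \<in> {Y\<in>C. Y \<inter> supp T = X0 \<inter> supp T}"
  proof (intro allI impI)
    fix W assume W: "W \<subseteq> V'"
    have "flip W X \<inter> supp T = X \<inter> supp T" using W sT unfolding flip_def by auto
    then show "flip W X \<in> {Y\<in>C. Y \<inter> supp T = X0 \<inter> supp T}" using blk W XX0 by auto
  qed
  then have "polar_full (ground n - supp T) \<subseteq> LK (ground n - supp T) {Y\<in>C. Y \<inter> supp T = X0 \<inter> supp T}"
    unfolding gg by (rule LK_full)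
  then have "link T (polar n C) = polar_full (ground n - supp T)"
    unfolding L using LK_subset_full by (rule subset_antisym[rotated])
  then have LT: "link T (polar n C) = polar_full V'" unfolding gg .
  show ?thesis unfolding cham_def
    by (rule CollectI, rule conjI[OF V'], rule bexI[of _ T]) (use sT LT TP in auto)
qed

lemma block_of_link:
  assumes code: "is_code n C" and T: "T \<in> polar n C" and L: "link T (polar n C) = polar_full \<sigma>"
  shows "\<exists>X0\<in>C. T = sv (ground n - \<sigma>) X0 \<and> \<sigma> \<subseteq> ground n \<and> (\<forall>W\<subseteq>\<sigma>. flip W X0 \<in> C)"
proof -
  obtain X0 where X0: "X0 \<in> C" "T = sv (supp T) X0" "supp T \<subseteq> ground n"
    and L0: "link T (polar n C) = LK (ground n - supp T) {Y\<in>C. Y \<inter> supp T = X0 \<inter> supp T}"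
    using link_polar[OF code T] by blast
  define A where "A = supp T"
  define V where "V = ground n - A"
  define S where "S = {Y\<in>C. Y \<inter> A = X0 \<inter> A}"
  have LS: "LK V S = polar_full \<sigma>" using L L0 unfolding V_def S_def A_def by simp
  have X0S: "X0 \<in> S" using X0 unfolding S_def by simp
  have "V \<subseteq> \<sigma>"
  proof
    fix v assume v: "v \<in> V"
    have "{(v, v \<in> X0)} \<in> LK V S" unfolding LK_def sv_def using X0S v by blast
    then show "v \<in> \<sigma>" using LS unfolding polar_full_def by auto
  qed
  moreover have "\<sigma> \<subseteq> V"
  proof
    fix s assume s: "s \<in> \<sigma>"
    have "{(s, True)} \<in> polar_full \<sigma>" using s unfolding polar_full_def by auto
    then have "{(s, True)} \<in> LK V S" using LS by simp
    then show "s \<in> V" unfolding LK_def sv_def by auto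
  qed
  ultimately have Vs: "V = \<sigma>" by blast
  have Ag: "A \<subseteq> ground n" using X0(3) A_def by simp
  have sg: "\<sigma> \<subseteq> ground n" using Vs V_def by auto
  have As: "A = ground n - \<sigma>" using Vs V_def Ag by auto
  have X0g: "X0 \<subseteq> ground n" using code_sub[OF code X0(1)] .
  have blk: "\<forall>W\<subseteq>\<sigma>. flip W X0 \<in> C"
  proof (intro allI impI)
    fix W assume W: "W \<subseteq> \<sigma>"
    have "sv \<sigma> (flip W X0) \<in> LK V S" using LS sv_in_full by simp
    then obtain Y where Y: "Y \<in> S" "sv \<sigma> (flip W X0) \<subseteq> sv \<sigma> Y" unfolding LK_def Vs by blast
    have e1: "flip W X0 \<inter> \<sigma> = Y \<inter> \<sigma>" using Y(2) sv_subset_iff by blast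
    have e2: "Y \<inter> A = X0 \<inter> A" using Y(1) S_def by simp
    have Yg: "Y \<subseteq> ground n" using Y(1) code_sub[OF code] S_def by auto
    have "flip W X0 = Y"
    proof
      show "flip W X0 \<subseteq> Y"
      proof
        fix i assume i: "i \<in> flip W X0"
        then have ig: "i \<in> ground n" using X0g W sg unfolding flip_def by auto
        show "i \<in> Y"
        proof (cases "i \<in> \<sigma>")
          case True then show ?thesis using e1 i by blast
        next
          case False
          then have "i \<in> A" "i \<notin> W" using ig As W by auto
          then show ?thesis using e2 i unfolding flip_def by auto
        qed
      qed
    next
      show "Y \<subseteq> flip W X0"
      proof
        fix i assume i: "i \<in> Y"
        then have ig: "i \<in> ground n" using Yg by auto
        show "i \<in> flip W X0"
        proof (cases "i \<in> \<sigma>")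
          case True then show ?thesis using e1 i by blast
        next
          case False
          then have "i \<in> A" "i \<notin> W" using ig As W by auto
          then show ?thesis using e2 i unfolding flip_def by auto
        qed
      qed
    qed
    then show "flip W X0 \<in> C" using Y(1) S_def by simp
  qed
  have "T = sv (ground n - \<sigma>) X0" using X0(2) As A_def by simp
  then show ?thesis using X0(1) sg blk by blast
qed

lemma cham_helper:
  assumes code: "is_code n C" and SH: "SH C pos"
    and X1: "X1 \<in> C" and X2: "X2 \<in> C" and sg: "\<sigma> \<subseteq> ground n"
    and b1: "\<forall>W\<subseteq>\<sigma>. flip W X1 \<in> C" and b2: "\<forall>W\<subseteq>\<sigma>. flip W X2 \<in> C"
    and ne: "X1 \<inter> (ground n - \<sigma>) \<noteq> X2 \<inter> (ground n - \<sigma>)"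
    and W1: "W1 \<subseteq> \<sigma>"
    and mx: "\<forall>Y \<in> {flip W X1 | W. W \<subseteq> \<sigma>} \<union> {flip W X2 | W. W \<subseteq> \<sigma>}. pos Y \<le> pos (flip W1 X1)"
  shows "\<exists>k \<in> ground n - \<sigma>. \<sigma> \<union> {k} \<in> cham n C"
proof -
  define A where "A = ground n - \<sigma>"
  define X where "X = flip W1 X1"
  have X1g: "X1 \<subseteq> ground n" using code_sub[OF code X1] .
  have X2g: "X2 \<subseteq> ground n" using code_sub[OF code X2] .
  have XC: "X \<in> C" using b1 W1 X_def by blast
  define D0 where "D0 = flip X1 X2 \<inter> A"
  have D0ne: "D0 \<noteq> {}" using ne unfolding D0_def A_def flip_def by blast
  define X' where "X' = flip D0 X"
  have W'sub: "flip X' X2 \<subseteq> \<sigma>"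
  proof
    fix i assume i: "i \<in> flip X' X2"
    have Xg: "X \<subseteq> ground n" using XC code_sub[OF code] by blast
    have D0g: "D0 \<subseteq> ground n" unfolding D0_def A_def by auto
    have ig: "i \<in> ground n" using i Xg D0g X2g unfolding X'_def flip_def by auto
    show "i \<in> \<sigma>"
    proof (rule ccontr)
      assume "i \<notin> \<sigma>"
      then have iA: "i \<in> A" "i \<notin> W1" using ig W1 A_def by auto
      then show False using i unfolding X'_def D0_def X_def flip_def by auto
    qed
  qed
  have X'eq: "X' = flip (flip X' X2) X2" unfolding flip_def by auto
  have X'C: "X' \<in> C" using b2 W'sub X'eq by metis
  have X'U: "X' \<in> {flip W X2 | W. W \<subseteq> \<sigma>}" using W'sub X'eq by blast
  have "pos X' \<le> pos X" using mx X'U X_def by blast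
  moreover have "X' \<noteq> X" using D0ne unfolding X'_def flip_def by auto
  moreover have "pos X' \<noteq> pos X"
    using SH X'C XC \<open>X' \<noteq> X\<close> unfolding SH_def inj_on_def by blast
  ultimately have lt: "pos X' < pos X" by simp
  obtain k where k: "k \<in> flip X' X" "flip {k} X \<in> C" "pos (flip {k} X) < pos X"
    using SH XC X'C lt unfolding SH_def by blast
  have kA: "k \<in> A" using k(1) unfolding X'_def D0_def flip_def by auto
  define V' where "V' = \<sigma> \<union> {k}"
  define Q where "Q = {Y. Y - V' = X - V'}"
  have SH': "SH (C \<inter> Q) pos"
  proof (rule SH_restrict[OF SH])
    fix Y Z j assume "Y \<in> C \<inter> Q" "Z \<in> C \<inter> Q" "j \<in> flip Z Y"
    then show "flip {j} Y \<in> Q" unfolding Q_def flip_def by blast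
  qed
  have D: "\<forall>Y\<in>C \<inter> Q. \<forall>Z\<in>C \<inter> Q. flip Y Z \<subseteq> V'" unfolding Q_def flip_def by blast
  have fV': "finite V'" unfolding V'_def using sg by (simp add: finite_subset)
  have XQ: "X \<in> C \<inter> Q" using XC Q_def by simp
  have nb: "\<forall>j\<in>V'. flip {j} X \<in> C \<inter> Q \<and> pos (flip {j} X) < pos X"
  proof
    fix j assume j: "j \<in> V'"
    have inQ: "flip {j} X \<in> Q" using j unfolding Q_def flip_def by auto
    show "flip {j} X \<in> C \<inter> Q \<and> pos (flip {j} X) < pos X"
    proof (cases "j = k")
      case True then show ?thesis using k inQ by simp
    next
      case False
      then have js: "j \<in> \<sigma>" using j V'_def by auto
      have e: "flip {j} X = flip (flip {j} W1) X1" unfolding X_def by (rule flip_flip2)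
      have sub: "flip {j} W1 \<subseteq> \<sigma>" using js W1 unfolding flip_def by auto
      have inC: "flip {j} X \<in> C" using b1 sub e by metis
      have "flip {j} X \<in> {flip W X1 | W. W \<subseteq> \<sigma>}" using sub e by blast
      then have "pos (flip {j} X) \<le> pos X" using mx X_def by blast
      moreover have "flip {j} X \<noteq> X" unfolding flip_def by auto
      moreover have "pos (flip {j} X) \<noteq> pos X"
        using SH inC XC \<open>flip {j} X \<noteq> X\<close> unfolding SH_def inj_on_def by blast
      ultimately show ?thesis using inC inQ by simp
    qed
  qed
  have blk: "\<forall>W\<subseteq>V'. flip W X \<in> C"
    using L_main[OF fV' SH' D XQ nb] by blast
  have V'g: "V' \<subseteq> ground n" using sg kA unfolding V'_def A_def by auto
  have "V' \<in> cham n C" using cham_of_block[OF code XC V'g blk] .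
  then show ?thesis using kA unfolding V'_def A_def by blast
qed

lemma no_chamber:
  assumes code: "is_code n C" and SH: "SH C pos"
  shows "\<not> chamber_obstruction n C \<sigma>"
proof
  assume "chamber_obstruction n C \<sigma>"
  then obtain T1 T2 where fac: "facet (cham n C) \<sigma>" and T1: "T1 \<in> polar n C" and T2: "T2 \<in> polar n C"
    and ne: "T1 \<noteq> T2" and L1: "link T1 (polar n C) = polar_full \<sigma>"
    and L2: "link T2 (polar n C) = polar_full \<sigma>"
    unfolding chamber_obstruction_def by blast
  obtain X1 where X1: "X1 \<in> C" "T1 = sv (ground n - \<sigma>) X1" "\<sigma> \<subseteq> ground n" "\<forall>W\<subseteq>\<sigma>. flip W X1 \<in> C"
    using block_of_link[OF code T1 L1] by blast
  obtain X2 where X2: "X2 \<in> C" "T2 = sv (ground n - \<sigma>) X2" "\<forall>W\<subseteq>\<sigma>. flip W X2 \<in> C"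
    using block_of_link[OF code T2 L2] by blast
  have neX: "X1 \<inter> (ground n - \<sigma>) \<noteq> X2 \<inter> (ground n - \<sigma>)"
    using ne X1(2) X2(2) sv_eq_iff by metis
  define U where "U = {flip W X1 | W. W \<subseteq> \<sigma>} \<union> {flip W X2 | W. W \<subseteq> \<sigma>}"
  have fU: "finite U" unfolding U_def using X1(3)
    by (simp add: finite_image_set finite_subset)
  have UC: "U \<subseteq> C" unfolding U_def using X1(4) X2(3) by blast
  have "X1 \<in> U" unfolding U_def by (metis (mono_tags, lifting) UnI1 empty_subsetI flip_def mem_Collect_eq Diff_empty Un_empty_right empty_Diff)
  then have "U \<noteq> {}" by blast
  then have "Max (pos ` U) \<in> pos ` U" using fU by simp
  then obtain X where X: "X \<in> U" "pos X = Max (pos ` U)" by auto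
  have mx: "\<forall>Y\<in>U. pos Y \<le> pos X" using X fU by simp
  obtain k where k: "k \<in> ground n - \<sigma>" "\<sigma> \<union> {k} \<in> cham n C"
  proof (cases "X \<in> {flip W X1 | W. W \<subseteq> \<sigma>}")
    case True
    then obtain W1 where W1: "W1 \<subseteq> \<sigma>" "X = flip W1 X1" by blast
    show ?thesis using cham_helper[OF code SH X1(1) X2(1) X1(3) X1(4) X2(3) neX W1(1)] mx W1(2) that
      unfolding U_def by blast
  next
    case False
    then have "X \<in> {flip W X2 | W. W \<subseteq> \<sigma>}" using X(1) U_def by blast
    then obtain W1 where W1: "W1 \<subseteq> \<sigma>" "X = flip W1 X2" by blast
    have neX': "X2 \<inter> (ground n - \<sigma>) \<noteq> X1 \<inter> (ground n - \<sigma>)" using neX by metis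
    have U': "U = {flip W X2 | W. W \<subseteq> \<sigma>} \<union> {flip W X1 | W. W \<subseteq> \<sigma>}" unfolding U_def by blast
    show ?thesis using cham_helper[OF code SH X2(1) X1(1) X1(3) X2(3) X1(4) neX' W1(1)] mx W1(2) that
      unfolding U' by blast
  qed
  have "\<sigma> \<subseteq> \<sigma> \<union> {k}" by blast
  then have "\<sigma> \<union> {k} = \<sigma>" using fac k(2) unfolding facet_def by blast
  then show False using k(1) by blast
qed

lemma proj_cont: "continuous_map (euclidean :: (nat \<Rightarrow> real) topology) euclideanreal (\<lambda>f. f v)"
  by (metis continuous_map_product_projection euclidean_product_topology iso_tuple_UNIV_I)

lemma cont_into_fun:
  "continuous_map Z (euclidean :: (nat \<Rightarrow> real) topology) h \<longleftrightarrow> (\<forall>v. continuous_map Z euclideanreal (\<lambda>z. h z v))"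
  by (metis continuous_map_componentwise_UNIV euclidean_product_topology)

lemma defret_step:
  fixes P Q :: "(nat \<Rightarrow> real) set" and H :: "real \<times> (nat \<Rightarrow> real) \<Rightarrow> nat \<Rightarrow> real"
  assumes cP: "closed P" and cQ: "closed Q"
    and cont: "\<And>v. continuous_map (prod_topology (top_of_set {0..1}) (top_of_set P)) euclideanreal (\<lambda>z. H z v)"
    and H0: "\<And>f. f \<in> P \<Longrightarrow> H (0,f) = f"
    and Hin: "\<And>t f. t \<in> {0..1} \<Longrightarrow> f \<in> P \<Longrightarrow> H (t,f) \<in> P \<union> Q"
    and H1: "\<And>f. f \<in> P \<Longrightarrow> H (1,f) \<in> Q"
    and Hfix: "\<And>t f. t \<in> {0..1} \<Longrightarrow> f \<in> P \<Longrightarrow> f \<in> Q \<Longrightarrow> H (t,f) = f"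
  shows "top_of_set (P \<union> Q) homotopy_equivalent_space top_of_set Q"
proof -
  define h where "h z = (if snd z \<in> P then H z else snd z)" for z
  define Z where "Z = prod_topology (top_of_set {0..1::real}) (top_of_set (P \<union> Q))"
  have tZ: "topspace Z = {0..1} \<times> (P \<union> Q)" unfolding Z_def by simp
  have cPZ: "closedin Z ({0..1} \<times> P)" unfolding Z_def closedin_prod_Times_iff
    using cP by (auto simp: closedin_closed)
  have cQZ: "closedin Z ({0..1} \<times> Q)" unfolding Z_def closedin_prod_Times_iff
    using cQ by (auto simp: closedin_closed)
  have sP: "subtopology Z ({0..1} \<times> P) = prod_topology (top_of_set {0..1}) (top_of_set P)"
    unfolding Z_def subtopology_Times subtopology_subtopology by (simp add: Int_absorb1 inf.absorb2 Un_Int_eq)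
  have sQ: "subtopology Z ({0..1} \<times> Q) = prod_topology (top_of_set {0..1}) (top_of_set Q)"
    unfolding Z_def subtopology_Times subtopology_subtopology by (simp add: Int_absorb1 inf.absorb2 Un_Int_eq)
  have hcoord: "continuous_map Z euclideanreal (\<lambda>z. h z v)" for v
  proof (rule pasting_lemma_closed[where I="{True,False}" and T="\<lambda>b. if b then {0..1} \<times> P else {0..1} \<times> Q"
        and f="\<lambda>b z. if b then H z v else snd z v"])
    show "finite {True, False}" by simp
  next
    fix i :: bool assume "i \<in> {True, False}"
    then show "closedin Z (if i then {0..1} \<times> P else {0..1} \<times> Q)" using cPZ cQZ by auto
  next
    fix i :: bool assume "i \<in> {True, False}"
    show "continuous_map (subtopology Z (if i then {0..1} \<times> P else {0..1} \<times> Q)) euclideanreal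
            (\<lambda>z. if i then H z v else snd z v)"
    proof (cases i)
      case True
      then show ?thesis using cont sP by simp
    next
      case False
      have "continuous_map (prod_topology (top_of_set {0..1::real}) (top_of_set Q)) euclideanreal (\<lambda>z. snd z v)"
        by (rule continuous_map_compose[OF continuous_map_snd, of _ _ "\<lambda>f. f v", unfolded o_def])
           (rule continuous_map_from_subtopology[OF proj_cont])
      then show ?thesis using False sQ by simp
    qed
  next
    fix i j :: bool and z
    assume "i \<in> {True, False}" "j \<in> {True, False}"
      "z \<in> topspace Z \<inter> (if i then {0..1} \<times> P else {0..1} \<times> Q) \<inter> (if j then {0..1} \<times> P else {0..1} \<times> Q)"
    then show "(if i then H z v else snd z v) = (if j then H z v else snd z v)"
      using Hfix[of "fst z" "snd z"] by (cases z) (auto split: if_splits)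
  next
    fix z assume "z \<in> topspace Z"
    then show "\<exists>j. j \<in> {True, False} \<and> z \<in> (if j then {0..1} \<times> P else {0..1} \<times> Q) \<and>
               h z v = (if j then H z v else snd z v)"
      unfolding tZ h_def by (cases z) auto
  qed
  have hmaps: "h z \<in> P \<union> Q" if "z \<in> topspace Z" for z
    using that Hin unfolding tZ h_def by (cases z) auto
  have ch: "continuous_map Z (top_of_set (P \<union> Q)) h"
    unfolding continuous_map_in_subtopology using hcoord hmaps cont_into_fun by blast
  define r where "r f = h (1, f)" for f
  have hom: "homotopic_with (\<lambda>x. True) (top_of_set (P \<union> Q)) (top_of_set (P \<union> Q)) id r"
  proof -
    have "\<forall>x\<in>topspace (top_of_set (P \<union> Q)). h (0, x) = id x" unfolding h_def using H0 by simp
    moreover have "\<forall>x\<in>topspace (top_of_set (P \<union> Q)). h (1, x) = r x" unfolding r_def by simp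
    ultimately show ?thesis using ch unfolding Z_def by (subst homotopic_with) auto
  qed
  have cr: "continuous_map (top_of_set (P \<union> Q)) (top_of_set (P \<union> Q)) r"
  proof -
    have "continuous_map (top_of_set (P \<union> Q)) Z (\<lambda>f. (1, f))"
      unfolding Z_def by (intro continuous_map_pairedI) (auto simp: continuous_map_id)
    then show ?thesis using continuous_map_compose[OF _ ch] unfolding r_def o_def by blast
  qed
  have rQ: "r f \<in> Q" if "f \<in> P \<union> Q" for f using that H1 unfolding r_def h_def by auto
  have rmap: "continuous_map (top_of_set (P \<union> Q)) (top_of_set Q) r"
    using cr rQ unfolding continuous_map_in_subtopology by auto
  have idmap: "continuous_map (top_of_set Q) (top_of_set (P \<union> Q)) id"
    unfolding continuous_map_in_subtopology by (auto intro: continuous_map_from_subtopology)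
  have rfix: "\<forall>x\<in>topspace (top_of_set Q). r (id x) = x"
    using Hfix unfolding r_def h_def by simp
  have "retraction_maps (top_of_set (P \<union> Q)) (top_of_set Q) r id"
    unfolding retraction_maps_def using rmap idmap rfix by blast
  moreover have "homotopic_with (\<lambda>x. True) (top_of_set (P \<union> Q)) (top_of_set (P \<union> Q)) r id"
    using hom homotopic_with_sym by blast
  ultimately show ?thesis using deformation_retract_imp_homotopy_equivalent_space by blast
qed

definition smplx :: "nat set \<Rightarrow> (nat \<Rightarrow> real) set" where
  "smplx \<sigma> = {f. (\<forall>v. 0 \<le> f v) \<and> (\<forall>v. v \<notin> \<sigma> \<longrightarrow> f v = 0) \<and> sum f \<sigma> = 1}"

lemma closed_smplx:
  assumes "finite \<sigma>"
  shows "closed (smplx \<sigma>)"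
proof -
  have c1: "closedin euclidean {f::nat\<Rightarrow>real. 0 \<le> f v \<and> (v \<notin> \<sigma> \<longrightarrow> f v = 0)}" for v
  proof -
    have cl: "closedin euclideanreal {x::real. 0 \<le> x \<and> (v \<notin> \<sigma> \<longrightarrow> x = 0)}"
    proof (cases "v \<in> \<sigma>")
      case True
      then have "{x::real. 0 \<le> x \<and> (v \<notin> \<sigma> \<longrightarrow> x = 0)} = {0..}" by auto
      then show ?thesis by (simp add: closed_closedin[symmetric])
    next
      case False
      then have "{x::real. 0 \<le> x \<and> (v \<notin> \<sigma> \<longrightarrow> x = 0)} = {0}" by auto
      then show ?thesis by (simp add: closed_closedin[symmetric])
    qed
    from closedin_continuous_map_preimage[OF proj_cont cl, of v] show ?thesis by simp
  qed
  have c2: "closedin euclidean {f::nat\<Rightarrow>real. sum f \<sigma> = 1}"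
  proof -
    have "continuous_map (euclidean :: (nat \<Rightarrow> real) topology) euclideanreal (\<lambda>f. sum f \<sigma>)"
      using assms by (intro continuous_map_sum proj_cont)
    from closedin_continuous_map_preimage[OF this, of "{1}"] show ?thesis
      by (simp add: closed_closedin[symmetric])
  qed
  have eq: "smplx \<sigma> = \<Inter> (range (\<lambda>v. {f::nat\<Rightarrow>real. 0 \<le> f v \<and> (v \<notin> \<sigma> \<longrightarrow> f v = 0)})) \<inter> {f. sum f \<sigma> = 1}"
    unfolding smplx_def by auto
  have "closedin euclidean (\<Inter> (range (\<lambda>v. {f::nat\<Rightarrow>real. 0 \<le> f v \<and> (v \<notin> \<sigma> \<longrightarrow> f v = 0)})))"
    using c1 by (intro closedin_Inter) auto
  then show ?thesis unfolding eq closed_closedin using c2 by (intro closedin_Int)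
qed

lemma smplx_mono:
  assumes "\<sigma> \<subseteq> \<rho>" "finite \<rho>"
  shows "smplx \<sigma> \<subseteq> smplx \<rho>"
proof
  fix f assume f: "f \<in> smplx \<sigma>"
  have "sum f \<rho> = sum f \<sigma>"
    using f assms by (intro sum.mono_neutral_right) (auto simp: smplx_def)
  then show "f \<in> smplx \<rho>" using f assms unfolding smplx_def by auto
qed

lemma realization_Delta:
  assumes "\<forall>X\<in>S. finite X"
  shows "realization (Delta S) = \<Union> (smplx ` S)"
proof
  show "realization (Delta S) \<subseteq> \<Union> (smplx ` S)"
  proof
    fix f assume "f \<in> realization (Delta S)"
    then obtain \<nu> X where X: "X \<in> S" "\<nu> \<subseteq> X" and f: "finite \<nu>" "\<forall>v. 0 \<le> f v" "\<forall>v. v \<notin> \<nu> \<longrightarrow> f v = 0" "sum f \<nu> = 1"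
      unfolding realization_def Delta_def by blast
    have "f \<in> smplx \<nu>" using f unfolding smplx_def by auto
    then have "f \<in> smplx X" using smplx_mono[OF X(2)] assms X(1) by blast
    then show "f \<in> \<Union> (smplx ` S)" using X(1) by blast
  qed
next
  show "\<Union> (smplx ` S) \<subseteq> realization (Delta S)"
  proof
    fix f assume "f \<in> \<Union> (smplx ` S)"
    then obtain X where X: "X \<in> S" "f \<in> smplx X" by blast
    have "X \<in> Delta S" unfolding Delta_def using X by blast
    then show "f \<in> realization (Delta S)" unfolding realization_def using X assms unfolding smplx_def by blast
  qed
qed

definition delta_fn :: "nat \<Rightarrow> nat \<Rightarrow> real" where
  "delta_fn w = (\<lambda>v. if v = w then 1 else 0)"

lemma delta_in_smplx: "w \<in> \<sigma> \<Longrightarrow> finite \<sigma> \<Longrightarrow> delta_fn w \<in> smplx \<sigma>"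
  unfolding smplx_def delta_fn_def by (auto simp: sum.delta)

lemma cont_fst_real: "continuous_map (prod_topology (top_of_set {0..1::real}) Y) euclideanreal fst"
  using continuous_map_fst continuous_map_into_fulltopology by blast

lemma cont_snd_coord: "continuous_map (prod_topology X (top_of_set (P::(nat\<Rightarrow>real) set))) euclideanreal (\<lambda>z. snd z v)"
proof -
  have "continuous_map (top_of_set P) euclideanreal (\<lambda>f. f v)"
    by (rule continuous_map_from_subtopology[OF proj_cont])
  then show ?thesis using continuous_map_compose[OF continuous_map_snd] unfolding o_def by blast
qed

lemma contractible_smplx:
  assumes "finite \<sigma>" "w \<in> \<sigma>"
  shows "contractible (smplx \<sigma>)"
proof -
  define h where "h z = (\<lambda>v. (1 - fst z) * snd z v + fst z * delta_fn w v)" for z :: "real \<times> (nat \<Rightarrow> real)"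
  have hin: "h z \<in> smplx \<sigma>" if "z \<in> {0..1} \<times> smplx \<sigma>" for z
  proof -
    define t where "t = fst z"
    define f where "f = snd z"
    have z: "z = (t, f)" "t \<in> {0..1}" "f \<in> smplx \<sigma>" using that unfolding t_def f_def by auto
    have "sum (h z) \<sigma> = (1 - t) * sum f \<sigma> + t * sum (delta_fn w) \<sigma>"
      unfolding h_def z by (simp add: sum.distrib sum_distrib_left)
    also have "\<dots> = 1" using z assms unfolding smplx_def delta_fn_def by (simp add: sum.delta)
    finally show ?thesis using z assms unfolding smplx_def h_def delta_fn_def by auto
  qed
  have cont: "continuous_map (prod_topology (top_of_set {0..1}) (top_of_set (smplx \<sigma>))) (top_of_set (smplx \<sigma>)) h"
    unfolding continuous_map_in_subtopology
  proof
    show "continuous_map (prod_topology (top_of_set {0..1}) (top_of_set (smplx \<sigma>))) euclidean h"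
      unfolding cont_into_fun h_def
      by (intro allI continuous_intros cont_fst_real cont_snd_coord)
    show "h \<in> topspace (prod_topology (top_of_set {0..1}) (top_of_set (smplx \<sigma>))) \<rightarrow> smplx \<sigma>"
      using hin by auto
  qed
  have "homotopic_with (\<lambda>x. True) (top_of_set (smplx \<sigma>)) (top_of_set (smplx \<sigma>)) id (\<lambda>x. delta_fn w)"
  proof -
    have hin': "\<And>t f. 0 \<le> t \<Longrightarrow> t \<le> 1 \<Longrightarrow> f \<in> smplx \<sigma> \<Longrightarrow> (\<lambda>v. (1 - t) * f v + t * delta_fn w v) \<in> smplx \<sigma>"
      using hin unfolding h_def by force
    show ?thesis using cont hin' unfolding h_def by (subst homotopic_with) (auto intro!: exI[of _ h] simp: h_def)
  qed
  then show ?thesis unfolding contractible_def by blast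
qed

lemma cont_Min:
  assumes "finite K" "K \<noteq> {}" "\<And>k. k \<in> K \<Longrightarrow> continuous_map Z euclideanreal (g k)"
  shows "continuous_map Z euclideanreal (\<lambda>z. Min ((\<lambda>k. g k z) ` K))"
  using assms
proof (induction K rule: finite_ne_induct)
  case (singleton x)
  then show ?case by simp
next
  case (insert x F)
  have "(\<lambda>z. Min ((\<lambda>k. g k z) ` insert x F)) = (\<lambda>z. min (g x z) (Min ((\<lambda>k. g k z) ` F)))"
    using insert.hyps by (simp add: Min_insert)
  then show ?case using insert by (simp add: continuous_map_real_min)
qed

lemma sum_ind:
  assumes "finite X" "K \<subseteq> X"
  shows "(\<Sum>v\<in>X. if v \<in> K then (1::real) else 0) = real (card K)"
proof -
  have "(\<Sum>v\<in>X. if v \<in> K then (1::real) else 0) = sum (\<lambda>v. 1::real) {v\<in>X. v \<in> K}"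
    using sum.inter_filter[OF assms(1), of "\<lambda>v. 1::real" "\<lambda>v. v \<in> K"] by simp
  also have "{v\<in>X. v \<in> K} = K" using assms(2) by auto
  finally show ?thesis by simp
qed

lemma sum_H:
  assumes "finite X" "K \<subseteq> X" "w \<in> X"
  shows "(\<Sum>v\<in>X. f v - a * (if v \<in> K then 1 else 0) + b * (if v = w then 1 else 0)) = sum f X - a * real (card K) + (b::real)"
proof -
  have "(\<Sum>v\<in>X. f v - a * (if v \<in> K then 1 else 0) + b * (if v = w then 1 else 0))
      = sum f X - a * (\<Sum>v\<in>X. if v \<in> K then 1 else 0) + b * (\<Sum>v\<in>X. if v = w then 1 else 0)"
    by (simp add: sum.distrib sum_subtractf sum_distrib_left)
  then show ?thesis using sum_ind[OF assms(1,2)] assms(1,3) by (simp add: sum.delta)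
qed

lemma contr_U:
  assumes "finite S" "SH S pos" "{} \<notin> S" "S \<noteq> {}" "\<forall>X\<in>S. finite X"
  shows "contractible (\<Union> (smplx ` S))"
  using assms
proof (induction "card S" arbitrary: S rule: less_induct)
  case (less S)
  note fS = less.prems(1) and SH = less.prems(2) and ne = less.prems(3) and Sne = less.prems(4)
    and fin = less.prems(5)
  define X where "X = (SOME X. X \<in> S \<and> pos X = Max (pos ` S))"
  have "Max (pos ` S) \<in> pos ` S" using Sne fS by simp
  then have "\<exists>X. X \<in> S \<and> pos X = Max (pos ` S)" by auto
  then have "X \<in> S \<and> pos X = Max (pos ` S)" unfolding X_def by (rule someI_ex)
  then have X: "X \<in> S" "pos X = Max (pos ` S)" by auto
  have maxX: "\<forall>Y\<in>S. pos Y \<le> pos X" using X fS by simp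
  have inj: "\<And>Y Z. Y \<in> S \<Longrightarrow> Z \<in> S \<Longrightarrow> pos Y = pos Z \<Longrightarrow> Y = Z"
    using SH unfolding SH_def inj_on_def by blast
  define S' where "S' = S - {X}"
  have ltX: "pos Y < pos X" if "Y \<in> S'" for Y
    using that maxX inj X(1) unfolding S'_def by (metis DiffE insertI1 le_neq_implies_less)
  have fX: "finite X" using fin X(1) by blast
  have XneE: "X \<noteq> {}" using ne X(1) by blast
  have US: "\<Union> (smplx ` S) = smplx X \<union> \<Union> (smplx ` S')" unfolding S'_def using X(1) by blast
  show ?case
  proof (cases "S' = {}")
    case True
    then have "\<Union> (smplx ` S) = smplx X" using US by simp
    moreover obtain w where "w \<in> X" using XneE by blast
    ultimately show ?thesis using contractible_smplx[OF fX] by simp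
  next
    case False
    have IH: "contractible (\<Union> (smplx ` S'))"
    proof (rule less.hyps)
      show "card S' < card S" unfolding S'_def using card_Diff1_less[OF fS X(1)] .
      show "finite S'" unfolding S'_def using fS by simp
      show "SH S' pos" unfolding S'_def using SH_remove_max[OF SH maxX] .
      show "{} \<notin> S'" unfolding S'_def using ne by simp
      show "S' \<noteq> {}" by (rule False)
      show "\<forall>X\<in>S'. finite X" unfolding S'_def using fin by simp
    qed
    show ?thesis
    proof (cases "\<exists>k. k \<notin> X \<and> insert k X \<in> S'")
      case True
      then obtain k where k: "k \<notin> X" "insert k X \<in> S'" by blast
      have "finite (insert k X)" using fX by simp
      then have "smplx X \<subseteq> smplx (insert k X)" by (intro smplx_mono) auto
      then have "\<Union> (smplx ` S) = \<Union> (smplx ` S')" using US k(2) by blast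
      then show ?thesis using IH by simp
    next
      case noup: False
      define K where "K = {k\<in>X. X - {k} \<in> S'}"
      have key: "\<exists>k\<in>K. k \<notin> Y" if Y: "Y \<in> S'" for Y
      proof -
        have YS: "Y \<in> S" using Y S'_def by simp
        obtain k where k: "k \<in> flip Y X" "flip {k} X \<in> S" "pos (flip {k} X) < pos X"
          using SH X(1) YS ltX[OF Y] unfolding SH_def by blast
        have "flip {k} X \<noteq> X" using k(3) by auto
        then have kS': "flip {k} X \<in> S'" using k(2) S'_def by simp
        have kX: "k \<in> X"
        proof (rule ccontr)
          assume "k \<notin> X"
          then have "flip {k} X = insert k X" unfolding flip_def by auto
          then show False using noup kS' \<open>k \<notin> X\<close> by auto
        qed
        then have "flip {k} X = X - {k}" unfolding flip_def by auto
        then have "k \<in> K" using kX kS' K_def by simp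
        moreover have "k \<notin> Y" using k(1) kX unfolding flip_def by auto
        ultimately show ?thesis by blast
      qed
      have KX: "K \<subseteq> X" unfolding K_def by auto
      have fK: "finite K" using KX fX finite_subset by blast
      have Kne: "K \<noteq> {}" using key False by blast
      have KneX: "K \<noteq> X"
      proof
        assume KeqX: "K = X"
        let ?S = "S \<inter> {Y. Y \<subseteq> X}"
        have SH': "SH ?S pos"
        proof (rule SH_restrict[OF SH])
          fix Y Z k assume "Y \<in> S \<inter> {Y. Y \<subseteq> X}" "Z \<in> S \<inter> {Y. Y \<subseteq> X}" "k \<in> flip Z Y"
          then show "flip {k} Y \<in> {Y. Y \<subseteq> X}" unfolding flip_def by auto
        qed
        have D: "\<forall>Y\<in>?S. \<forall>Z\<in>?S. flip Y Z \<subseteq> X" unfolding flip_def by blast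
        have X0: "X \<in> ?S" using X(1) by simp
        have nb: "\<forall>k\<in>X. flip {k} X \<in> ?S \<and> pos (flip {k} X) < pos X"
        proof
          fix k assume k: "k \<in> X"
          then have "X - {k} \<in> S'" using KeqX K_def by blast
          moreover have "flip {k} X = X - {k}" using k unfolding flip_def by auto
          ultimately show "flip {k} X \<in> ?S \<and> pos (flip {k} X) < pos X" using ltX S'_def by auto
        qed
        have "flip X X \<in> ?S" using L_main[OF fX SH' D X0 nb] by blast
        moreover have "flip X X = {}" unfolding flip_def by auto
        ultimately show False using ne by simp
      qed
      obtain w where w: "w \<in> X" "w \<notin> K" using KX KneX by blast
      define m where "m f = Min ((\<lambda>k. f k) ` K)" for f :: "nat \<Rightarrow> real"
      define H where "H z = (\<lambda>v. snd z v - fst z * m (snd z) * (if v \<in> K then 1 else 0)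
                              + fst z * m (snd z) * real (card K) * (if v = w then 1 else 0))"
        for z :: "real \<times> (nat \<Rightarrow> real)"
      have m_le: "m f \<le> f k" if "k \<in> K" for f k
        unfolding m_def using fK that by (intro Min_le) auto
      have m_ge: "0 \<le> m f" if "f \<in> smplx X" for f
        unfolding m_def using fK Kne that by (subst Min_ge_iff) (auto simp: smplx_def)
      have m_in: "\<exists>k\<in>K. f k = m f" for f
      proof -
        have "m f \<in> (\<lambda>k. f k) ` K" unfolding m_def using fK Kne by (intro Min_in) auto
        then show ?thesis by auto
      qed
      have Hin: "H (t, f) \<in> smplx X" if t: "t \<in> {0..1}" and f: "f \<in> smplx X" for t f
      proof -
        have tm: "t * m f \<le> m f" using t m_ge[OF f] by (simp add: mult_left_le_one_le)
        have tm0: "0 \<le> t * m f" using t m_ge[OF f] by simp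
        have nn: "0 \<le> H (t, f) v" for v
        proof -
          have f0: "0 \<le> f v" using f unfolding smplx_def by auto
          show ?thesis
          proof (cases "v \<in> K")
            case True
            then have "v \<noteq> w" using w by auto
            then show ?thesis unfolding H_def using True m_le[OF True, of f] tm by simp
          next
            case False
            then show ?thesis unfolding H_def using f0 tm0 by (cases "v = w") auto
          qed
        qed
        have zo: "H (t, f) v = 0" if "v \<notin> X" for v
        proof -
          have "v \<notin> K" "v \<noteq> w" using that KX w by auto
          then show ?thesis unfolding H_def using f that unfolding smplx_def by auto
        qed
        have "sum (H (t, f)) X = sum f X - t * m f * real (card K) + t * m f * real (card K)"
          unfolding H_def using sum_H[OF fX KX w(1), of f "t * m f" "t * m f * real (card K)"] by simp
        also have "\<dots> = 1" using f unfolding smplx_def by simp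
        finally show ?thesis using nn zo unfolding smplx_def by auto
      qed
      have Hfix: "H (t, f) = f" if f1: "f \<in> smplx X" and f2: "f \<in> \<Union> (smplx ` S')" for t f
      proof -
        obtain Y where Y: "Y \<in> S'" "f \<in> smplx Y" using f2 by blast
        obtain k where k: "k \<in> K" "k \<notin> Y" using key[OF Y(1)] by blast
        have "f k = 0" using Y(2) k(2) unfolding smplx_def by auto
        then have "m f = 0" using m_le[OF k(1), of f] m_ge[OF f1] by simp
        then show ?thesis unfolding H_def by simp
      qed
      have H1: "H (1, f) \<in> \<Union> (smplx ` S')" if f: "f \<in> smplx X" for f
      proof -
        obtain k0 where k0: "k0 \<in> K" "f k0 = m f" using m_in by blast
        have "k0 \<noteq> w" using k0 w by auto
        then have Hk0: "H (1, f) k0 = 0" unfolding H_def using k0 by simp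
        have inX: "H (1, f) \<in> smplx X" using Hin[of 1 f] f by simp
        have "H (1, f) \<in> smplx (X - {k0})"
        proof -
          have "sum (H (1, f)) (X - {k0}) = sum (H (1, f)) X - H (1, f) k0"
            using k0(1) KX fX by (auto simp add: sum_diff1)
          then have "sum (H (1, f)) (X - {k0}) = 1" using inX Hk0 unfolding smplx_def by simp
          then show ?thesis using inX Hk0 unfolding smplx_def by auto
        qed
        moreover have "X - {k0} \<in> S'" using k0(1) K_def by simp
        ultimately show ?thesis by blast
      qed
      have H0: "H (0, f) = f" for f unfolding H_def by simp
      have cont: "continuous_map (prod_topology (top_of_set {0..1}) (top_of_set (smplx X))) euclideanreal (\<lambda>z. H z v)" for v
      proof -
        have cm: "continuous_map (prod_topology (top_of_set {0..1::real}) (top_of_set (smplx X))) euclideanreal (\<lambda>z. m (snd z))"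
          unfolding m_def by (rule cont_Min[OF fK Kne]) (rule cont_snd_coord)
        show ?thesis unfolding H_def
          by (intro continuous_intros cont_fst_real cont_snd_coord cm)
      qed
      have cQ: "closed (\<Union> (smplx ` S'))"
        using fin fS unfolding S'_def by (intro closed_Union) (auto intro: closed_smplx)
      have "top_of_set (smplx X \<union> \<Union> (smplx ` S')) homotopy_equivalent_space top_of_set (\<Union> (smplx ` S'))"
      proof (rule defret_step[OF closed_smplx[OF fX] cQ cont])
        show "\<And>f. f \<in> smplx X \<Longrightarrow> H (0, f) = f" using H0 by simp
        show "\<And>t f. t \<in> {0..1} \<Longrightarrow> f \<in> smplx X \<Longrightarrow> H (t, f) \<in> smplx X \<union> \<Union> (smplx ` S')" using Hin by blast
        show "\<And>f. f \<in> smplx X \<Longrightarrow> H (1, f) \<in> \<Union> (smplx ` S')" using H1 by blast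
        show "\<And>t f. t \<in> {0..1} \<Longrightarrow> f \<in> smplx X \<Longrightarrow> f \<in> \<Union> (smplx ` S') \<Longrightarrow> H (t, f) = f" using Hfix by blast
      qed
      then have "contractible (smplx X \<union> \<Union> (smplx ` S')) \<longleftrightarrow> contractible (\<Union> (smplx ` S'))"
        using homotopy_equivalent_space_contractibility contractible_space_top_of_set by metis
      then show ?thesis using IH US by simp
    qed
  qed
qed

lemma SH_act:
  assumes SH: "SH C pos"
  shows "SH (act g C) (\<lambda>Y. pos (flip g Y))"
  unfolding SH_def
proof (intro conjI ballI impI)
  have "inj_on pos C" using SH unfolding SH_def by simp
  then show "inj_on (\<lambda>Y. pos (flip g Y)) (act g C)"
    unfolding act_def inj_on_def by auto
next
  fix X' Y' assume X': "X' \<in> act g C" and Y': "Y' \<in> act g C" and lt: "pos (flip g Y') < pos (flip g X')"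
  obtain X where X: "X \<in> C" "X' = flip g X" using X' unfolding act_def by auto
  obtain Y where Y: "Y \<in> C" "Y' = flip g Y" using Y' unfolding act_def by auto
  have "pos Y < pos X" using lt X Y by simp
  then obtain k where k: "k \<in> flip Y X" "flip {k} X \<in> C" "pos (flip {k} X) < pos X"
    using SH X(1) Y(1) unfolding SH_def by blast
  have e1: "flip Y' X' = flip Y X" unfolding X Y flip_def by auto
  have e2: "flip {k} X' = flip g (flip {k} X)" unfolding X flip_def by auto
  have "flip {k} X' \<in> act g C" using e2 k(2) unfolding act_def by auto
  moreover have "pos (flip g (flip {k} X')) < pos (flip g X')" using e2 k(3) X(2) by simp
  ultimately show "\<exists>k. k \<in> flip Y' X' \<and> flip {k} X' \<in> act g C \<and> pos (flip g (flip {k} X')) < pos (flip g X')"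
    using k(1) e1 by blast
qed

lemma no_wb:
  assumes code: "is_code n C" and SH: "SH C pos"
  shows "\<not> weak_bitflip_obstruction n C g \<tau>"
proof
  assume "weak_bitflip_obstruction n C g \<tau>"
  then have g: "g \<subseteq> ground n" and tD: "\<tau> \<in> Delta (act g C)" and tn: "\<tau> \<notin> act g C"
    and nc: "\<not> contractible_cx (link \<tau> (Delta (act g C)))"
    unfolding weak_bitflip_obstruction_def by auto
  define gC where "gC = act g C"
  define posg where "posg Y = pos (flip g Y)" for Y
  have SHg: "SH gC posg" unfolding gC_def posg_def using SH_act[OF SH] .
  define S1 where "S1 = gC \<inter> {Y. \<tau> \<subseteq> Y}"
  have SH1: "SH S1 posg" unfolding S1_def
  proof (rule SH_restrict[OF SHg])
    fix X Y k assume "X \<in> gC \<inter> {Y. \<tau> \<subseteq> Y}" "Y \<in> gC \<inter> {Y. \<tau> \<subseteq> Y}" "k \<in> flip Y X"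
    then show "flip {k} X \<in> {Y. \<tau> \<subseteq> Y}" unfolding flip_def by auto
  qed
  define S2 where "S2 = (\<lambda>Y. Y - \<tau>) ` S1"
  define pos2 where "pos2 Z = posg (Z \<union> \<tau>)" for Z
  have bk: "Y - \<tau> \<union> \<tau> = Y" if "Y \<in> S1" for Y using that unfolding S1_def by auto
  have inj1: "\<And>Y Z. Y \<in> S1 \<Longrightarrow> Z \<in> S1 \<Longrightarrow> posg Y = posg Z \<Longrightarrow> Y = Z"
    using SH1 unfolding SH_def inj_on_def by blast
  have SH2: "SH S2 pos2" unfolding SH_def
  proof (intro conjI ballI impI)
    show "inj_on pos2 S2" unfolding inj_on_def S2_def pos2_def
      using bk inj1 by (metis (no_types, lifting) imageE)
  next
    fix X' Y' assume X': "X' \<in> S2" and Y': "Y' \<in> S2" and lt: "pos2 Y' < pos2 X'"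
    obtain X where X: "X \<in> S1" "X' = X - \<tau>" using X' unfolding S2_def by auto
    obtain Y where Y: "Y \<in> S1" "Y' = Y - \<tau>" using Y' unfolding S2_def by auto
    have "posg Y < posg X" using lt X Y bk unfolding pos2_def by simp
    then obtain k where k: "k \<in> flip Y X" "flip {k} X \<in> S1" "posg (flip {k} X) < posg X"
      using SH1 X(1) Y(1) unfolding SH_def by blast
    have kt: "k \<notin> \<tau>" using k(1) X(1) Y(1) unfolding S1_def flip_def by auto
    have e1: "k \<in> flip Y' X'" using k(1) kt X(2) Y(2) unfolding flip_def by auto
    have e2: "flip {k} X' = flip {k} X - \<tau>" using kt X(2) unfolding flip_def by auto
    have "flip {k} X' \<in> S2" using e2 k(2) unfolding S2_def by auto
    moreover have "pos2 (flip {k} X') < pos2 X'"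
      unfolding pos2_def using e2 bk[OF k(2)] bk[OF X(1)] X(2) k(3) by simp
    ultimately show "\<exists>k. k \<in> flip Y' X' \<and> flip {k} X' \<in> S2 \<and> pos2 (flip {k} X') < pos2 X'"
      using e1 by blast
  qed
  have link_eq: "link \<tau> (Delta gC) = Delta S2"
  proof
    show "link \<tau> (Delta gC) \<subseteq> Delta S2"
    proof
      fix \<nu> assume "\<nu> \<in> link \<tau> (Delta gC)"
      then have n1: "\<nu> \<inter> \<tau> = {}" and n2: "\<nu> \<union> \<tau> \<in> Delta gC" unfolding link_def by auto
      then obtain Y where Y: "Y \<in> gC" "\<nu> \<union> \<tau> \<subseteq> Y" unfolding Delta_def by blast
      then have "Y \<in> S1" unfolding S1_def by auto
      moreover have "\<nu> \<subseteq> Y - \<tau>" using Y n1 by auto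
      ultimately show "\<nu> \<in> Delta S2" unfolding Delta_def S2_def by blast
    qed
  next
    show "Delta S2 \<subseteq> link \<tau> (Delta gC)"
    proof
      fix \<nu> assume "\<nu> \<in> Delta S2"
      then obtain Y where Y: "Y \<in> S1" "\<nu> \<subseteq> Y - \<tau>" unfolding Delta_def S2_def by blast
      then have "Y \<in> gC" "\<tau> \<subseteq> Y" unfolding S1_def by auto
      then show "\<nu> \<in> link \<tau> (Delta gC)" unfolding link_def Delta_def using Y by blast
    qed
  qed
  have finC: "finite C" using code unfolding is_code_def
    by (metis finite_Pow_iff finite_ground rev_finite_subset)
  have fS2: "finite S2" unfolding S2_def S1_def gC_def act_def using finC by simp
  have finE: "\<forall>Z\<in>S2. finite Z"
  proof
    fix Z assume "Z \<in> S2"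
    then obtain X where X: "X \<in> C" "Z = flip g X - \<tau>" unfolding S2_def S1_def gC_def act_def by auto
    have "X \<subseteq> ground n" using X(1) code unfolding is_code_def by blast
    then have "flip g X \<subseteq> ground n" using g unfolding flip_def by auto
    then show "finite Z" using X(2) by (metis finite_Diff finite_ground rev_finite_subset)
  qed
  have ne: "{} \<notin> S2"
  proof
    assume "{} \<in> S2"
    then obtain Y where "Y \<in> S1" "Y - \<tau> = {}" unfolding S2_def by auto
    then have "Y = \<tau>" "Y \<in> gC" unfolding S1_def by auto
    then show False using tn gC_def by simp
  qed
  have Sne: "S2 \<noteq> {}"
  proof -
    obtain Y where "Y \<in> gC" "\<tau> \<subseteq> Y" using tD unfolding Delta_def gC_def by blast
    then have "Y - \<tau> \<in> S2" unfolding S2_def S1_def by auto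
    then show ?thesis by blast
  qed
  have R: "realization (Delta S2) = \<Union> (smplx ` S2)" using realization_Delta[OF finE] .
  have "contractible (\<Union> (smplx ` S2))" using contr_U[OF fS2 SH2 ne Sne finE] .
  moreover have "\<Union> (smplx ` S2) \<noteq> {}"
  proof -
    obtain Z where Z: "Z \<in> S2" using Sne by blast
    then obtain w where "w \<in> Z" using ne by (metis all_not_in_conv)
    then have "delta_fn w \<in> smplx Z" using delta_in_smplx finE Z by blast
    then show ?thesis using Z by blast
  qed
  ultimately have "contractible_cx (Delta S2)" unfolding contractible_cx_def R by simp
  then show False using nc link_eq gC_def by simp
qed

theorem theoremE:
  fixes n :: nat and C :: "nat set set"
  assumes "is_code n C"
    and "shellable (polar n C)"
  shows "(\<nexists>g \<tau>. weak_bitflip_obstruction n C g \<tau>)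
       \<and> (\<nexists>F. sphere_link_obstruction n C F)
       \<and> (\<nexists>\<sigma>. chamber_obstruction n C \<sigma>)"
proof -
  obtain pos where SH: "SH C pos" using shellable_SH[OF assms] by blast
  show ?thesis using no_wb[OF assms(1) SH] no_sphere[OF assms(1) SH] no_chamber[OF assms(1) SH] by blast
qed

end
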